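(* Let $f\in C^2(\mathbb R)$, $G>0$, and let $u:[0,\infty)\times\mathbb R\to\mathbb R$ be continuous with compact support. Assume that through every point of a dense subset of $[0,\infty)\times\mathbb R$ there passes a characteristic curve of $u$, defined on $[0,\infty)$, along which $t\mapsto u(t,\gamma(t))$ is $G$-Lipschitz continuous. Then there exists a Lagrangian parameterization $\chi$ associated with $u$ such that for every $y\in\mathbb R$ the map $t\mapsto u(t,\chi(t,y))$ is $G$-Lipschitz continuous.
   Context: $\lambda(t,x):=f'(u(t,x))$. A characteristic curve of $u$ is an absolutely continuous function $\gamma$ on an interval of $[0,\infty)$ with $\dot\gamma(t)=\lambda(t,\gamma(t))$ for a.e. $t$. A Lagrangian parameterization associated with $u$ is a continuous surjective map $\chi:[0,\infty)\times\mathbb R\to\mathbb R$ such that for every $y$, $t\mapsto\chi(t,y)$ is a characteristic curve defined on $[0,\infty)$, and for every $t$, $y\mapsto\chi(t,y)$ is nondecreasing. *)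

theory Defs
  imports "HOL-Analysis.Analysis"
begin

definition C2 :: "(real \<Rightarrow> real) \<Rightarrow> bool" where
  "C2 f \<longleftrightarrow> (\<exists>f' f''. (\<forall>x. (f has_real_derivative f' x) (at x)) \<and>
                      (\<forall>x. (f' has_real_derivative f'' x) (at x)) \<and> continuous_on UNIV f'')"

definition abs_cont_on_interval :: "(real \<Rightarrow> real) \<Rightarrow> real \<Rightarrow> real \<Rightarrow> bool" where
  "abs_cont_on_interval g a b \<longleftrightarrow>
     (\<forall>e>0. \<exists>d>0. \<forall>(n::nat) (l::nat \<Rightarrow> real) (r::nat \<Rightarrow> real).
        (\<forall>i<n. a \<le> l i \<and> l i \<le> r i \<and> r i \<le> b) \<and>
        (\<forall>i. Suc i < n \<longrightarrow> r i \<le> l (Suc i)) \<and>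
        (\<Sum>i<n. r i - l i) < d
        \<longrightarrow> (\<Sum>i<n. \<bar>g (r i) - g (l i)\<bar>) < e)"

definition abs_cont_on :: "(real \<Rightarrow> real) \<Rightarrow> real set \<Rightarrow> bool" where
  "abs_cont_on g I \<longleftrightarrow> (\<forall>a b. {a..b} \<subseteq> I \<longrightarrow> abs_cont_on_interval g a b)"

definition char_curve :: "(real \<Rightarrow> real) \<Rightarrow> (real \<Rightarrow> real \<Rightarrow> real) \<Rightarrow> (real \<Rightarrow> real) \<Rightarrow> bool" where
  "char_curve f u \<gamma> \<longleftrightarrow> abs_cont_on \<gamma> {0..} \<and>
     (AE t in lebesgue. 0 \<le> t \<longrightarrow> (\<gamma> has_real_derivative deriv f (u t (\<gamma> t))) (at t))"

definition lagrangian_param :: "(real \<Rightarrow> real) \<Rightarrow> (real \<Rightarrow> real \<Rightarrow> real) \<Rightarrow> (real \<Rightarrow> real \<Rightarrow> real) \<Rightarrow> bool" where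
  "lagrangian_param f u X \<longleftrightarrow>
     continuous_on ({0..} \<times> UNIV) (\<lambda>(t,y). X t y) \<and>
     (\<lambda>(t,y). X t y) ` ({0..} \<times> UNIV) = UNIV \<and>
     (\<forall>y. char_curve f u (\<lambda>t. X t y)) \<and>
     (\<forall>t\<ge>0. mono (X t))"

end

theory Submission
  imports Defs
begin

lemma small_open_cover:
  assumes "negligible N" "e > 0"
  obtains W where "open W" "N \<subseteq> W" "W \<in> lmeasurable" "measure lebesgue W < e"
proof -
  obtain T where T: "open T" "N \<subseteq> T" "(T - N) \<in> lmeasurable" "emeasure lebesgue (T - N) < ennreal e"
    using sets_lebesgue_outer_open[OF negligible_imp_sets[OF assms(1)] assms(2)] by blast
  have Nl: "N \<in> lmeasurable" using assms(1)
    by (simp add: negligible_iff_null_sets null_sets_def fmeasurableI)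
  have eq: "T = (T - N) \<union> N" using T by auto
  have Tl: "T \<in> lmeasurable" by (subst eq) (intro fmeasurable.Un T(3) Nl)
  have "measure lebesgue T \<le> measure lebesgue (T - N) + measure lebesgue N"
    by (subst eq) (intro measure_Un_le; use T Nl in auto)
  also have "measure lebesgue N = 0" using negligible_imp_measure0[OF assms(1)] .
  also have "measure lebesgue (T - N) < e"
  proof -
    have "emeasure lebesgue (T - N) = ennreal (measure lebesgue (T - N))"
      using T(3) by (intro emeasure_eq_ennreal_measure) (auto simp: fmeasurable_def)
    with T(4) show ?thesis by (simp add: ennreal_less_iff)
  qed
  finally show ?thesis using that T Tl by auto
qed
lemma sorted_intervals_le:
  fixes l r :: "nat \<Rightarrow> real"
  assumes "\<forall>i. Suc i < n \<longrightarrow> r i \<le> l (Suc i)" "\<forall>i<n. l i \<le> r i"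
  shows "i < j \<Longrightarrow> j < n \<Longrightarrow> r i \<le> l j"
proof (induction j)
  case 0 then show ?case by simp
next
  case (Suc j)
  show ?case
  proof (cases "i = j")
    case True then show ?thesis using assms Suc by auto
  next
    case False
    then have "r i \<le> l j" using Suc by auto
    also have "l j \<le> r j" using assms Suc by auto
    also have "r j \<le> l (Suc j)" using assms Suc by auto
    finally show ?thesis .
  qed
qed

lemma sum_intervals_le_measure:
  fixes l r :: "nat \<Rightarrow> real"
  assumes sorted: "\<forall>i. Suc i < n \<longrightarrow> r i \<le> l (Suc i)"
    and lr: "\<forall>i<n. l i \<le> r i \<and> {l i..r i} \<subseteq> W" and W: "W \<in> lmeasurable"
  shows "(\<Sum>i<n. r i - l i) \<le> measure lebesgue W"
proof -
  have disj: "disjoint_family_on (\<lambda>i. {l i<..<r i}) {..<n}"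
  proof (unfold disjoint_family_on_def, intro ballI impI)
    fix i j assume ij: "i \<in> {..<n}" "j \<in> {..<n}" "i \<noteq> j"
    show "{l i<..<r i} \<inter> {l j<..<r j} = {}"
    proof (cases "i < j")
      case True
      then have "r i \<le> l j" using sorted_intervals_le[OF sorted] lr ij by auto
      then show ?thesis by auto
    next
      case False
      then have "j < i" using ij by auto
      then have "r j \<le> l i" using sorted_intervals_le[OF sorted] lr ij by auto
      then show ?thesis by auto
    qed
  qed
  have "measure lebesgue (\<Union>i\<in>{..<n}. {l i<..<r i}) = (\<Sum>i<n. measure lebesgue {l i<..<r i})"
    by (rule measure_finite_Union) (use disj lr in auto)
  also have "\<dots> = (\<Sum>i<n. r i - l i)" using lr by (intro sum.cong) auto
  finally have eq: "measure lebesgue (\<Union>i\<in>{..<n}. {l i<..<r i}) = (\<Sum>i<n. r i - l i)" .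
  have "measure lebesgue (\<Union>i\<in>{..<n}. {l i<..<r i}) \<le> measure lebesgue W"
  proof (rule measure_mono_fmeasurable)
    show "(\<Union>i\<in>{..<n}. {l i<..<r i}) \<subseteq> W"
    proof
      fix x assume "x \<in> (\<Union>i\<in>{..<n}. {l i<..<r i})"
      then obtain i where "i < n" "l i < x" "x < r i" by auto
      then have "x \<in> {l i..r i}" by auto
      with lr \<open>i < n\<close> show "x \<in> W" by blast
    qed
  qed (use W in auto)
  then show ?thesis using eq by simp
qed

lemma AC_zero_deriv:
  fixes g :: "real \<Rightarrow> real"
  assumes ac: "abs_cont_on_interval g a b" and ab: "a \<le> b" and N: "negligible N"
    and der: "\<And>x. x \<in> {a..b} \<Longrightarrow> x \<notin> N \<Longrightarrow> (g has_real_derivative 0) (at x)"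
  shows "g b = g a"
proof -
  have main: "\<bar>g b - g a\<bar> \<le> \<epsilon> * (b - a + 1)" if eps: "\<epsilon> > 0" for \<epsilon>
  proof -
    obtain d where d: "d > 0" and dP0: "\<forall>(n::nat) (l::nat \<Rightarrow> real) (r::nat \<Rightarrow> real). (\<forall>i<n. a \<le> l i \<and> l i \<le> r i \<and> r i \<le> b) \<and>
        (\<forall>i. Suc i < n \<longrightarrow> r i \<le> l (Suc i)) \<and> (\<Sum>i<n. r i - l i) < d
        \<longrightarrow> (\<Sum>i<n. \<bar>g (r i) - g (l i)\<bar>) < \<epsilon>"
      using ac[unfolded abs_cont_on_interval_def, rule_format, OF eps] by blast
    note dP = dP0[rule_format]
    obtain W where W: "open W" "N \<subseteq> W" "W \<in> lmeasurable" "measure lebesgue W < d"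
      using small_open_cover[OF N d] by blast
    have "\<forall>z. \<exists>\<delta>>0. (z \<in> {a..b} \<longrightarrow> z \<notin> N \<longrightarrow> (\<forall>y. \<bar>y - z\<bar> < \<delta> \<longrightarrow> \<bar>g y - g z\<bar> \<le> \<epsilon> * \<bar>y - z\<bar>))
                   \<and> (z \<in> N \<longrightarrow> ball z \<delta> \<subseteq> W)"
    proof
      fix z
      show "\<exists>\<delta>>0. (z \<in> {a..b} \<longrightarrow> z \<notin> N \<longrightarrow> (\<forall>y. \<bar>y - z\<bar> < \<delta> \<longrightarrow> \<bar>g y - g z\<bar> \<le> \<epsilon> * \<bar>y - z\<bar>))
                   \<and> (z \<in> N \<longrightarrow> ball z \<delta> \<subseteq> W)"
      proof (cases "z \<in> N")
        case True
        then obtain \<delta> where "\<delta> > 0" "ball z \<delta> \<subseteq> W" using W open_contains_ball by blast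
        then show ?thesis using True by blast
      next
        case False
        show ?thesis
        proof (cases "z \<in> {a..b}")
          case True
          have "(g has_derivative (*) 0) (at z)"
            using der[OF True False] unfolding has_field_derivative_def .
          then obtain \<delta> where "\<delta> > 0" "\<forall>y. norm (y - z) < \<delta> \<longrightarrow> norm (g y - g z - 0 * (y - z)) \<le> \<epsilon> * norm (y - z)"
            using eps unfolding has_derivative_at_alt by blast
          then show ?thesis using False by (intro exI[of _ \<delta>]) auto
        next
          case False2: False
          show ?thesis using False False2 by (intro exI[of _ 1]) auto
        qed
      qed
    qed
    then obtain \<delta> where \<delta>pos: "\<And>z. \<delta> z > 0"
      and \<delta>good: "\<And>z y. z \<in> {a..b} \<Longrightarrow> z \<notin> N \<Longrightarrow> \<bar>y - z\<bar> < \<delta> z \<Longrightarrow> \<bar>g y - g z\<bar> \<le> \<epsilon> * \<bar>y - z\<bar>"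
      and \<delta>bad: "\<And>z. z \<in> N \<Longrightarrow> ball z (\<delta> z) \<subseteq> W"
      by metis
    define Q where "Q c \<longleftrightarrow> (\<exists>n l r. (\<forall>i<n. a \<le> l i \<and> l i \<le> r i \<and> r i \<le> c \<and> {l i..r i} \<subseteq> W) \<and>
        (\<forall>i. Suc i < n \<longrightarrow> r i \<le> l (Suc i)) \<and>
        \<bar>g c - g a\<bar> \<le> \<epsilon> * (c - a) + (\<Sum>i<n. \<bar>g (r i) - g (l i)\<bar>))" for c
    have step: "Q q" if Qp: "Q p" and pq: "a \<le> p" "p \<le> q" and z: "z = p \<or> z = q" "z \<in> {a..b}"
       and close: "q - p < \<delta> z" for p q z
    proof -
      from Qp obtain n l r where
        lr: "\<forall>i<n. a \<le> l i \<and> l i \<le> r i \<and> r i \<le> p \<and> {l i..r i} \<subseteq> W"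
        and srt: "\<forall>i. Suc i < n \<longrightarrow> r i \<le> l (Suc i)"
        and ineq: "\<bar>g p - g a\<bar> \<le> \<epsilon> * (p - a) + (\<Sum>i<n. \<bar>g (r i) - g (l i)\<bar>)"
        unfolding Q_def by blast
      show ?thesis
      proof (cases "z \<in> N")
        case False
        have "\<bar>g q - g p\<bar> \<le> \<epsilon> * (q - p)"
        proof (cases "z = p")
          case True
          then show ?thesis using \<delta>good[OF z(2) False, of q] close pq by auto
        next
          case False2: False
          then have "z = q" using z by auto
          then show ?thesis using \<delta>good[OF z(2) False, of p] close pq by (auto simp: abs_minus_commute)
        qed
        then have "\<bar>g q - g a\<bar> \<le> \<epsilon> * (q - a) + (\<Sum>i<n. \<bar>g (r i) - g (l i)\<bar>)"
          using ineq by (auto simp: algebra_simps)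
        moreover have "\<forall>i<n. a \<le> l i \<and> l i \<le> r i \<and> r i \<le> q \<and> {l i..r i} \<subseteq> W"
          using lr pq by force
        ultimately show ?thesis unfolding Q_def using srt by blast
      next
        case True
        have sub: "{p..q} \<subseteq> W"
        proof
          fix y assume "y \<in> {p..q}"
          then have "y \<in> ball z (\<delta> z)" using z close by (auto simp: dist_real_def)
          then show "y \<in> W" using \<delta>bad[OF True] by blast
        qed
        define l' where "l' = l(n := p)"
        define r' where "r' = r(n := q)"
        have "(\<Sum>i<Suc n. \<bar>g (r' i) - g (l' i)\<bar>) = (\<Sum>i<n. \<bar>g (r i) - g (l i)\<bar>) + \<bar>g q - g p\<bar>"
          by (simp add: l'_def r'_def)
        moreover have "\<bar>g q - g a\<bar> \<le> \<bar>g q - g p\<bar> + \<bar>g p - g a\<bar>" by arith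
        moreover have "\<epsilon> * p \<le> \<epsilon> * q" using eps pq by simp
        ultimately have "\<bar>g q - g a\<bar> \<le> \<epsilon> * (q - a) + (\<Sum>i<Suc n. \<bar>g (r' i) - g (l' i)\<bar>)"
          using ineq by (simp add: algebra_simps)
        moreover have "\<forall>i<Suc n. a \<le> l' i \<and> l' i \<le> r' i \<and> r' i \<le> q \<and> {l' i..r' i} \<subseteq> W"
          using lr pq sub by (auto simp: l'_def r'_def less_Suc_eq)
        moreover have "\<forall>i. Suc i < Suc n \<longrightarrow> r' i \<le> l' (Suc i)"
          using srt lr by (auto simp: l'_def r'_def less_Suc_eq)
        ultimately show ?thesis unfolding Q_def by blast
      qed
    qed
    define S where "S = {c. a \<le> c \<and> c \<le> b \<and> Q c}"
    have Qa: "Q a" unfolding Q_def by (intro exI[of _ 0]) auto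
    have aS: "a \<in> S" using Qa ab by (auto simp: S_def)
    have bdd: "bdd_above S" by (auto simp: S_def bdd_above_def)
    define s where "s = Sup S"
    have as: "a \<le> s" using aS bdd by (auto simp: s_def intro: cSup_upper)
    have sb: "s \<le> b" using aS by (auto simp: s_def S_def intro!: cSup_least)
    have Qs: "Q s"
    proof (cases "s = a")
      case True then show ?thesis using Qa by simp
    next
      case False
      have "s - \<delta> s < Sup S" using \<delta>pos s_def by auto
      then obtain c where c: "c \<in> S" "s - \<delta> s < c" using less_cSup_iff[of S] aS bdd by blast
      have cs: "c \<le> s" using c bdd by (auto simp: s_def intro: cSup_upper)
      show ?thesis using step[of c s s] c cs as sb by (auto simp: S_def)
    qed
    have sb': "s = b"
    proof (rule ccontr)
      assume "s \<noteq> b"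
      then have slt: "s < b" using sb by auto
      define q where "q = min b (s + \<delta> s / 2)"
      have sq: "s < q" using slt \<delta>pos[of s] by (auto simp: q_def)
      have "Q q" using step[OF Qs as, of q s] sq as sb \<delta>pos[of s] by (auto simp: q_def)
      then have "q \<in> S" using as sq by (auto simp: S_def q_def)
      then have "q \<le> s" using bdd by (auto simp: s_def intro: cSup_upper)
      then show False using sq by simp
    qed
    from Qs[unfolded sb'] obtain n l r where
        lr: "\<forall>i<n. a \<le> l i \<and> l i \<le> r i \<and> r i \<le> b \<and> {l i..r i} \<subseteq> W"
        and srt: "\<forall>i. Suc i < n \<longrightarrow> r i \<le> l (Suc i)"
        and ineq: "\<bar>g b - g a\<bar> \<le> \<epsilon> * (b - a) + (\<Sum>i<n. \<bar>g (r i) - g (l i)\<bar>)"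
        unfolding Q_def by blast
    have "(\<Sum>i<n. r i - l i) \<le> measure lebesgue W"
      using sum_intervals_le_measure[OF srt _ W(3)] lr by auto
    then have "(\<Sum>i<n. r i - l i) < d" using W(4) by linarith
    then have "(\<Sum>i<n. \<bar>g (r i) - g (l i)\<bar>) < \<epsilon>" using dP lr srt by blast
    then show ?thesis using ineq by (simp add: algebra_simps)
  qed
  show ?thesis
  proof (rule ccontr)
    assume ne: "g b \<noteq> g a"
    define \<epsilon> where "\<epsilon> = \<bar>g b - g a\<bar> / (2 * (b - a + 1))"
    have pos: "\<epsilon> > 0" using ne ab by (auto simp: \<epsilon>_def)
    have "\<epsilon> * (b - a + 1) = \<bar>g b - g a\<bar> / 2" using ab by (simp add: \<epsilon>_def field_simps)
    then show False using main[OF pos] ne by simp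
  qed
qed

lemma AC_minus_lip:
  assumes ac: "abs_cont_on_interval g a b" and L: "L \<ge> 0"
    and lip: "\<And>x y. x \<in> {a..b} \<Longrightarrow> y \<in> {a..b} \<Longrightarrow> \<bar>F y - F x\<bar> \<le> L * \<bar>y - x\<bar>"
  shows "abs_cont_on_interval (\<lambda>s. g s - F s) a b"
  unfolding abs_cont_on_interval_def
proof (intro allI impI)
  fix e :: real assume e: "e > 0"
  obtain d where d: "d > 0" and dP0: "\<forall>(n::nat) (l::nat \<Rightarrow> real) (r::nat \<Rightarrow> real). (\<forall>i<n. a \<le> l i \<and> l i \<le> r i \<and> r i \<le> b) \<and>
        (\<forall>i. Suc i < n \<longrightarrow> r i \<le> l (Suc i)) \<and> (\<Sum>i<n. r i - l i) < d
        \<longrightarrow> (\<Sum>i<n. \<bar>g (r i) - g (l i)\<bar>) < e/2"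
    using ac[unfolded abs_cont_on_interval_def, rule_format, of "e/2"] e by auto
  define d' where "d' = min d (e / (2 * (L + 1)))"
  have d'pos: "d' > 0" using d e L by (auto simp: d'_def)
  show "\<exists>d>0. \<forall>(n::nat) (l::nat \<Rightarrow> real) (r::nat \<Rightarrow> real). (\<forall>i<n. a \<le> l i \<and> l i \<le> r i \<and> r i \<le> b) \<and>
        (\<forall>i. Suc i < n \<longrightarrow> r i \<le> l (Suc i)) \<and> (\<Sum>i<n. r i - l i) < d
        \<longrightarrow> (\<Sum>i<n. \<bar>g (r i) - F (r i) - (g (l i) - F (l i))\<bar>) < e"
  proof (intro exI[of _ d'] conjI allI impI d'pos)
    fix n :: nat and l r :: "nat \<Rightarrow> real"
    assume H: "(\<forall>i<n. a \<le> l i \<and> l i \<le> r i \<and> r i \<le> b) \<and>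
        (\<forall>i. Suc i < n \<longrightarrow> r i \<le> l (Suc i)) \<and> (\<Sum>i<n. r i - l i) < d'"
    have s1: "(\<Sum>i<n. \<bar>g (r i) - g (l i)\<bar>) < e/2" using dP0 H d'_def by auto
    have "(\<Sum>i<n. \<bar>g (r i) - F (r i) - (g (l i) - F (l i))\<bar>)
        \<le> (\<Sum>i<n. \<bar>g (r i) - g (l i)\<bar> + L * (r i - l i))"
    proof (rule sum_mono)
      fix i assume "i \<in> {..<n}"
      then have "a \<le> l i" "l i \<le> r i" "r i \<le> b" using H by auto
      then have "\<bar>F (r i) - F (l i)\<bar> \<le> L * (r i - l i)" using lip[of "l i" "r i"] by auto
      then show "\<bar>g (r i) - F (r i) - (g (l i) - F (l i))\<bar> \<le> \<bar>g (r i) - g (l i)\<bar> + L * (r i - l i)"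
        by arith
    qed
    also have "\<dots> = (\<Sum>i<n. \<bar>g (r i) - g (l i)\<bar>) + L * (\<Sum>i<n. r i - l i)"
      by (simp add: sum.distrib sum_distrib_left)
    also have "L * (\<Sum>i<n. r i - l i) \<le> L * (e / (2 * (L + 1)))"
      using H L by (intro mult_left_mono) (auto simp: d'_def)
    also have "L * (e / (2 * (L + 1))) \<le> e / 2"
      using L e by (simp add: field_simps)
    finally show "(\<Sum>i<n. \<bar>g (r i) - F (r i) - (g (l i) - F (l i))\<bar>) < e" using s1 by simp
  qed
qed

lemma lip_imp_AC:
  assumes L: "L \<ge> 0" and lip: "\<And>x y. x \<in> {a..b} \<Longrightarrow> y \<in> {a..b} \<Longrightarrow> \<bar>F y - F x\<bar> \<le> L * \<bar>y - x\<bar>"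
  shows "abs_cont_on_interval F a b"
proof -
  have z: "abs_cont_on_interval (\<lambda>s. 0) a b"
    unfolding abs_cont_on_interval_def by (auto intro: exI[of _ 1])
  have "abs_cont_on_interval (\<lambda>s. 0 - (- F s)) a b"
    by (rule AC_minus_lip[OF z L]) (use lip in \<open>auto simp: abs_minus_commute\<close>)
  then show ?thesis by simp
qed

lemma AC_cont:
  assumes ac: "abs_cont_on_interval g a b"
  shows "continuous_on {a..b} g"
  unfolding continuous_on_iff
proof (intro ballI allI impI)
  fix x e assume x: "x \<in> {a..b}" and e: "(0::real) < e"
  obtain d where d: "d > 0" and dP0: "\<forall>(n::nat) (l::nat \<Rightarrow> real) (r::nat \<Rightarrow> real). (\<forall>i<n. a \<le> l i \<and> l i \<le> r i \<and> r i \<le> b) \<and>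
        (\<forall>i. Suc i < n \<longrightarrow> r i \<le> l (Suc i)) \<and> (\<Sum>i<n. r i - l i) < d
        \<longrightarrow> (\<Sum>i<n. \<bar>g (r i) - g (l i)\<bar>) < e"
    using ac[unfolded abs_cont_on_interval_def, rule_format, OF e] by auto
  show "\<exists>d>0. \<forall>x'\<in>{a..b}. dist x' x < d \<longrightarrow> dist (g x') (g x) < e"
  proof (intro exI[of _ d] conjI ballI impI d)
    fix y assume y: "y \<in> {a..b}" and dy: "dist y x < d"
    have "(\<Sum>i<Suc 0. \<bar>g ((\<lambda>i. max x y) i) - g ((\<lambda>i. min x y) i)\<bar>) < e"
    proof -
      have "max x y - min x y < d" using dy by (auto simp: dist_real_def max_def min_def abs_if split: if_splits)
      then show ?thesis using dP0[rule_format, of "Suc 0" "\<lambda>i. min x y" "\<lambda>i. max x y"] x y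
        by auto
    qed
    then show "dist (g y) (g x) < e"
      by (auto simp: dist_real_def max_def min_def abs_minus_commute split: if_splits)
  qed
qed

locale setting =
  fixes f :: "real \<Rightarrow> real" and u :: "real \<Rightarrow> real \<Rightarrow> real" and G M T :: real
  assumes hcont: "continuous_on ({0..} \<times> UNIV) (\<lambda>(t,x). deriv f (u t x))"
    and ucont: "continuous_on ({0..} \<times> UNIV) (\<lambda>(t,x). u t x)"
    and hbound: "\<And>t x. t \<ge> 0 \<Longrightarrow> \<bar>deriv f (u t x)\<bar> \<le> M"
    and Tpos: "T > 0" and usupp: "\<And>t x. t \<ge> T \<Longrightarrow> u t x = 0"
    and Gpos: "G > 0"
begin

abbreviation "hh t x \<equiv> deriv f (u t x)"

definition "DG \<gamma> \<longleftrightarrow> continuous_on {0..} \<gamma> \<and> (\<forall>t>0. (\<gamma> has_real_derivative hh t (\<gamma> t)) (at t))"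
definition "IG \<gamma> \<longleftrightarrow> continuous_on {0..} \<gamma> \<and> (\<forall>t\<ge>0. \<gamma> t = \<gamma> 0 + integral {0..t} (\<lambda>s. hh s (\<gamma> s)))"
definition "LU \<gamma> \<longleftrightarrow> lipschitz_on G {0..} (\<lambda>s. u s (\<gamma> s))"
definition "NRM \<gamma> \<longleftrightarrow> (\<forall>t<0. \<gamma> t = \<gamma> 0)"
definition "good \<gamma> \<longleftrightarrow> DG \<gamma> \<and> LU \<gamma> \<and> NRM \<gamma>"

lemma Mnn: "M \<ge> 0" using hbound[of 0 0] by auto

lemma phi_cont:
  assumes "continuous_on S \<gamma>" "S \<subseteq> {0..}"
  shows "continuous_on S (\<lambda>s. hh s (\<gamma> s))"
proof -
  have "continuous_on S (\<lambda>s. (\<lambda>(t,x). deriv f (u t x)) (s, \<gamma> s))"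
    by (rule continuous_on_compose2[OF hcont]) (use assms in \<open>auto intro!: continuous_intros\<close>)
  then show ?thesis by simp
qed

lemma u_cont:
  assumes "continuous_on S \<gamma>" "S \<subseteq> {0..}"
  shows "continuous_on S (\<lambda>s. u s (\<gamma> s))"
proof -
  have "continuous_on S (\<lambda>s. (\<lambda>(t,x). u t x) (s, \<gamma> s))"
    by (rule continuous_on_compose2[OF ucont]) (use assms in \<open>auto intro!: continuous_intros\<close>)
  then show ?thesis by simp
qed

lemma DG_imp_IG: assumes "DG \<gamma>" shows "IG \<gamma>"
  unfolding IG_def
proof (intro conjI allI impI)
  show c: "continuous_on {0..} \<gamma>" using assms by (simp add: DG_def)
  fix t :: real assume t: "t \<ge> 0"
  show "\<gamma> t = \<gamma> 0 + integral {0..t} (\<lambda>s. hh s (\<gamma> s))"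
  proof (cases "t = 0")
    case True then show ?thesis by simp
  next
    case False
    have "((\<lambda>s. hh s (\<gamma> s)) has_integral \<gamma> t - \<gamma> 0) {0..t}"
    proof (rule fundamental_theorem_of_calculus_interior)
      show "0 \<le> t" using t .
      show "continuous_on {0..t} \<gamma>" using c by (rule continuous_on_subset) auto
      fix x assume "x \<in> {0<..<t}"
      then have "(\<gamma> has_real_derivative hh x (\<gamma> x)) (at x)" using assms by (auto simp: DG_def)
      then show "(\<gamma> has_vector_derivative hh x (\<gamma> x)) (at x)"
        by (simp add: has_real_derivative_iff_has_vector_derivative)
    qed
    then show ?thesis by (simp add: integral_unique)
  qed
qed

lemma integral_deriv_at:
  assumes c: "continuous_on {0..} \<gamma>" and t: "t > 0"
  shows "((\<lambda>s. integral {0..s} (\<lambda>s. hh s (\<gamma> s))) has_real_derivative hh t (\<gamma> t)) (at t)"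
proof -
  have "continuous_on {0..t+1} (\<lambda>s. hh s (\<gamma> s))"
    by (rule phi_cont) (use c in \<open>auto intro: continuous_on_subset\<close>)
  from integral_has_real_derivative[OF this, of t] t
  have "((\<lambda>s. integral {0..s} (\<lambda>s. hh s (\<gamma> s))) has_real_derivative hh t (\<gamma> t)) (at t within {0..t+1})"
    by auto
  moreover have "at t within {0..t+1} = at t"
    by (rule at_within_interior) (use t in auto)
  ultimately show ?thesis by simp
qed

lemma IG_imp_DG: assumes "IG \<gamma>" shows "DG \<gamma>"
  unfolding DG_def
proof (intro conjI allI impI)
  show c: "continuous_on {0..} \<gamma>" using assms by (simp add: IG_def)
  fix t :: real assume t: "t > 0"
  have d: "((\<lambda>s. \<gamma> 0 + integral {0..s} (\<lambda>s. hh s (\<gamma> s))) has_real_derivative hh t (\<gamma> t)) (at t)"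
    using integral_deriv_at[OF c t] by (auto intro!: derivative_eq_intros)
  have ev: "\<forall>\<^sub>F s in nhds t. \<gamma> s = \<gamma> 0 + integral {0..s} (\<lambda>s. hh s (\<gamma> s))"
  proof -
    have eq: "\<forall>s\<ge>0. \<gamma> s = \<gamma> 0 + integral {0..s} (\<lambda>s. hh s (\<gamma> s))"
      using assms unfolding IG_def by blast
    have "\<forall>\<^sub>F s in nhds t. s \<in> {0<..}" using t by (intro eventually_nhds_in_open) auto
    then show ?thesis by eventually_elim (rule eq[rule_format], simp)
  qed
  show "(\<gamma> has_real_derivative hh t (\<gamma> t)) (at t)"
    using d DERIV_cong_ev[OF refl ev refl] by simp
qed

lemma DG_lip: assumes "DG \<gamma>" shows "lipschitz_on M {0..} \<gamma>"
proof -
  have key: "\<bar>\<gamma> y - \<gamma> x\<bar> \<le> M * (y - x)" if xy: "0 \<le> x" "x < y" for x y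
  proof -
    have "continuous_on {x..y} \<gamma>" using assms xy by (auto simp: DG_def intro: continuous_on_subset)
    moreover have "\<gamma> differentiable at z" if "x < z" "z < y" for z
    proof -
      have "(\<gamma> has_real_derivative hh z (\<gamma> z)) (at z)" using assms that xy by (auto simp: DG_def)
      then show ?thesis by (auto simp: real_differentiable_def)
    qed
    ultimately obtain l z where z: "x < z" "z < y" "(\<gamma> has_real_derivative l) (at z)"
       "\<gamma> y - \<gamma> x = (y - x) * l"
      using MVT[OF xy(2)] by blast
    have "(\<gamma> has_real_derivative hh z (\<gamma> z)) (at z)" using assms z xy by (auto simp: DG_def)
    then have "l = hh z (\<gamma> z)" using z(3) DERIV_unique by blast
    then have "\<bar>l\<bar> \<le> M" using hbound[of z] z xy by auto
    then show ?thesis using z(4) xy by (simp add: abs_mult mult_right_mono mult.commute)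
  qed
  show ?thesis unfolding lipschitz_on_def
  proof (intro conjI Mnn ballI)
    fix x y :: real assume "x \<in> {0..}" "y \<in> {0..}"
    then show "dist (\<gamma> x) (\<gamma> y) \<le> M * dist x y"
      using key[of x y] key[of y x]
      by (cases x y rule: linorder_cases) (auto simp: dist_real_def abs_minus_commute)
  qed
qed

end

context setting begin


lemma char_cont:
  assumes acon: "abs_cont_on \<gamma> {0..}"
  shows "continuous_on {0..} \<gamma>"
  unfolding continuous_on_def
proof
  fix x :: real assume x: "x \<in> {0..}"
  have "continuous_on {0..x+1} \<gamma>"
    by (rule AC_cont) (use acon x in \<open>auto simp: abs_cont_on_def\<close>)
  then have "(\<gamma> \<longlongrightarrow> \<gamma> x) (at x within {0..x+1})"
    using x by (auto simp: continuous_on_def)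
  moreover have "at x within {0..} = at x within {0..x+1}"
    by (rule at_within_nhd[of _ "{..<x+1}"]) auto
  ultimately show "(\<gamma> \<longlongrightarrow> \<gamma> x) (at x within {0..})" by simp
qed

lemma F_lip:
  assumes c: "continuous_on {0..} \<gamma>" and xy: "0 \<le> x" "x \<le> y"
  shows "\<bar>integral {0..y} (\<lambda>s. hh s (\<gamma> s)) - integral {0..x} (\<lambda>s. hh s (\<gamma> s))\<bar> \<le> M * (y - x)"
proof -
  have cy: "continuous_on {0..y} (\<lambda>s. hh s (\<gamma> s))"
    by (rule phi_cont) (use c in \<open>auto intro: continuous_on_subset\<close>)
  have "integral {0..x} (\<lambda>s. hh s (\<gamma> s)) + integral {x..y} (\<lambda>s. hh s (\<gamma> s)) = integral {0..y} (\<lambda>s. hh s (\<gamma> s))"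
    by (rule Henstock_Kurzweil_Integration.integral_combine) (use xy cy integrable_continuous_interval in auto)
  moreover have "norm (integral {x..y} (\<lambda>s. hh s (\<gamma> s))) \<le> M * (y - x)"
    by (rule integral_bound) (use xy cy hbound in \<open>auto intro: continuous_on_subset\<close>)
  ultimately show ?thesis by (simp add: algebra_simps)
qed

lemma char_imp_IG:
  assumes ch: "char_curve f u \<gamma>"
  shows "IG \<gamma>"
proof -
  have acon: "abs_cont_on \<gamma> {0..}" and ae: "AE t in lebesgue. 0 \<le> t \<longrightarrow> (\<gamma> has_real_derivative hh t (\<gamma> t)) (at t)"
    using ch by (auto simp: char_curve_def)
  have c: "continuous_on {0..} \<gamma>" by (rule char_cont[OF acon])
  from ae obtain N where N: "\<And>x. x \<in> space lebesgue - N \<Longrightarrow> 0 \<le> x \<longrightarrow> (\<gamma> has_real_derivative hh x (\<gamma> x)) (at x)"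
      "N \<in> null_sets lebesgue"
    by (rule AE_E3) blast
  let ?F = "\<lambda>s. integral {0..s} (\<lambda>s. hh s (\<gamma> s))"
  have "\<gamma> b = \<gamma> 0 + ?F b" if b: "b > 0" for b
  proof -
    have ac: "abs_cont_on_interval (\<lambda>s. \<gamma> s - ?F s) 0 b"
    proof (rule AC_minus_lip[OF _ Mnn])
      show "abs_cont_on_interval \<gamma> 0 b" using acon by (auto simp: abs_cont_on_def)
      fix x y assume xy: "x \<in> {0..b}" "y \<in> {0..b}"
      show "\<bar>?F y - ?F x\<bar> \<le> M * \<bar>y - x\<bar>"
      proof (cases "x \<le> y")
        case True then show ?thesis using F_lip[OF c, of x y] xy by auto
      next
        case False then show ?thesis using F_lip[OF c, of y x] xy by (auto simp: abs_minus_commute)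
      qed
    qed
    have negl: "negligible (N \<union> {0, b})"
      using N(2) by (simp add: negligible_iff_null_sets[symmetric])
    have "(\<lambda>s. \<gamma> s - ?F s) b = (\<lambda>s. \<gamma> s - ?F s) 0"
    proof (rule AC_zero_deriv[OF ac _ negl])
      show "0 \<le> b" using b by simp
      fix x assume x: "x \<in> {0..b}" "x \<notin> N \<union> {0, b}"
      then have x0: "x > 0" by auto
      have d1: "(\<gamma> has_real_derivative hh x (\<gamma> x)) (at x)" using N(1)[of x] x by auto
      have d2: "(?F has_real_derivative hh x (\<gamma> x)) (at x)" by (rule integral_deriv_at[OF c x0])
      show "((\<lambda>s. \<gamma> s - ?F s) has_real_derivative 0) (at x)"
        using DERIV_diff[OF d1 d2] by simp
    qed
    then show ?thesis by simp
  qed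
  note bb = this
  show ?thesis unfolding IG_def
  proof (intro conjI c allI impI)
    fix t :: real assume t: "0 \<le> t"
    show "\<gamma> t = \<gamma> 0 + ?F t"
    proof (cases "t = 0")
      case True then show ?thesis by simp
    next
      case False then show ?thesis using t bb[of t] by simp
    qed
  qed
qed

lemma AC_empty:
  assumes ba: "b < a"
  shows "abs_cont_on_interval g a b"
proof -
  have n0: "n = 0" if H: "\<forall>i<n. a \<le> l i \<and> l i \<le> r i \<and> r i \<le> b" for n :: nat and l r :: "nat \<Rightarrow> real"
  proof (rule ccontr)
    assume "n \<noteq> 0"
    then have "0 < n" by simp
    with H have "a \<le> l 0" "l 0 \<le> r 0" "r 0 \<le> b" by auto
    with ba show False by simp
  qed
  show ?thesis unfolding abs_cont_on_interval_def
  proof (intro allI impI)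
    fix e :: real assume e: "e > 0"
    show "\<exists>d>0. \<forall>(n::nat) (l::nat \<Rightarrow> real) (r::nat \<Rightarrow> real). (\<forall>i<n. a \<le> l i \<and> l i \<le> r i \<and> r i \<le> b) \<and>
        (\<forall>i. Suc i < n \<longrightarrow> r i \<le> l (Suc i)) \<and> (\<Sum>i<n. r i - l i) < d
        \<longrightarrow> (\<Sum>i<n. \<bar>g (r i) - g (l i)\<bar>) < e"
      using e by (intro exI[of _ 1]) (auto dest!: n0)
  qed
qed

lemma DG_imp_char:
  assumes "DG \<gamma>"
  shows "char_curve f u \<gamma>"
  unfolding char_curve_def
proof
  have lip: "lipschitz_on M {0..} \<gamma>" by (rule DG_lip[OF assms])
  show "abs_cont_on \<gamma> {0..}" unfolding abs_cont_on_def
  proof (intro allI impI)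
    fix a b :: real assume sub: "{a..b} \<subseteq> {0..}"
    show "abs_cont_on_interval \<gamma> a b"
    proof (cases "a \<le> b")
      case True
      show ?thesis
      proof (rule lip_imp_AC[OF Mnn])
        fix x y assume "x \<in> {a..b}" "y \<in> {a..b}"
        then have "x \<in> {0..}" "y \<in> {0..}" using sub by auto
        then show "\<bar>\<gamma> y - \<gamma> x\<bar> \<le> M * \<bar>y - x\<bar>"
          using lip unfolding lipschitz_on_def by (auto simp: dist_real_def)
      qed
    next
      case False
      then show ?thesis by (intro AC_empty) simp
    qed
  qed
  show "AE t in lebesgue. 0 \<le> t \<longrightarrow> (\<gamma> has_real_derivative hh t (\<gamma> t)) (at t)"
  proof (rule AE_I'[of "{0}"])
    show "{0} \<in> null_sets lebesgue" by (simp add: negligible_iff_null_sets[symmetric])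
    show "{x \<in> space lebesgue. \<not> (0 \<le> x \<longrightarrow> (\<gamma> has_real_derivative hh x (\<gamma> x)) (at x))} \<subseteq> {0}"
    proof
      fix x assume "x \<in> {x \<in> space lebesgue. \<not> (0 \<le> x \<longrightarrow> (\<gamma> has_real_derivative hh x (\<gamma> x)) (at x))}"
      then have x: "0 \<le> x" "\<not> (\<gamma> has_real_derivative hh x (\<gamma> x)) (at x)" by auto
      have "\<not> 0 < x" using x(2) assms by (auto simp: DG_def)
      then show "x \<in> {0}" using x(1) by simp
    qed
  qed
qed

end

lemma either_deriv:
  fixes f1 f2 g :: "real \<Rightarrow> real"
  assumes d1: "(f1 has_real_derivative c) (at t)" and d2: "(f2 has_real_derivative c) (at t)"
    and eq: "f1 t = f2 t" and g: "\<And>y. g y = f1 y \<or> g y = f2 y"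
  shows "(g has_real_derivative c) (at t)"
proof -
  have bl: "bounded_linear ((*) c)" by (rule bounded_linear_mult_right)
  have A1: "\<forall>e>0. \<exists>d>0. \<forall>y. norm (y - t) < d \<longrightarrow> norm (f1 y - f1 t - c * (y - t)) \<le> e * norm (y - t)"
    using d1 unfolding has_field_derivative_def has_derivative_at_alt by blast
  have A2: "\<forall>e>0. \<exists>d>0. \<forall>y. norm (y - t) < d \<longrightarrow> norm (f2 y - f2 t - c * (y - t)) \<le> e * norm (y - t)"
    using d2 unfolding has_field_derivative_def has_derivative_at_alt by blast
  have gt: "g t = f1 t" using g[of t] eq by auto
  have "\<forall>e>0. \<exists>d>0. \<forall>y. norm (y - t) < d \<longrightarrow> norm (g y - g t - c * (y - t)) \<le> e * norm (y - t)"
  proof (intro allI impI)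
    fix e :: real assume e: "e > 0"
    obtain da where da: "da > 0" "\<forall>y. norm (y - t) < da \<longrightarrow> norm (f1 y - f1 t - c * (y - t)) \<le> e * norm (y - t)"
      using A1 e by blast
    obtain db where db: "db > 0" "\<forall>y. norm (y - t) < db \<longrightarrow> norm (f2 y - f2 t - c * (y - t)) \<le> e * norm (y - t)"
      using A2 e by blast
    show "\<exists>d>0. \<forall>y. norm (y - t) < d \<longrightarrow> norm (g y - g t - c * (y - t)) \<le> e * norm (y - t)"
    proof (intro exI[of _ "min da db"] conjI allI impI)
      show "min da db > 0" using da db by simp
      fix y assume y: "norm (y - t) < min da db"
      show "norm (g y - g t - c * (y - t)) \<le> e * norm (y - t)"
        using g[of y] da(2)[rule_format, of y] db(2)[rule_format, of y] y gt eq by auto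
    qed
  qed
  then show ?thesis unfolding has_field_derivative_def has_derivative_at_alt using bl by blast
qed

lemma ev_nhds_less:
  fixes f1 f2 :: "real \<Rightarrow> real"
  assumes "isCont f1 t" "isCont f2 t" "f1 t < f2 t"
  shows "\<forall>\<^sub>F y in nhds t. f1 y < f2 y"
proof -
  have "isCont (\<lambda>y. f2 y - f1 y) t" using assms by (intro continuous_intros)
  then have "((\<lambda>y. f2 y - f1 y) \<longlongrightarrow> f2 t - f1 t) (at t)"
    by (simp add: isCont_def)
  from order_tendstoD(1)[OF this, of 0] assms(3) have "\<forall>\<^sub>F y in at t. f1 y < f2 y" by simp
  then show ?thesis using assms(3) by (simp add: eventually_nhds_conv_at)
qed

lemma max_deriv:
  fixes f1 f2 :: "real \<Rightarrow> real"
  assumes d1: "(f1 has_real_derivative c1) (at t)" and d2: "(f2 has_real_derivative c2) (at t)"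
    and same: "f1 t = f2 t \<Longrightarrow> c1 = c2"
  shows "((\<lambda>y. max (f1 y) (f2 y)) has_real_derivative (if f1 t \<ge> f2 t then c1 else c2)) (at t)"
proof -
  have c1: "isCont f1 t" using d1 by (rule DERIV_isCont)
  have c2: "isCont f2 t" using d2 by (rule DERIV_isCont)
  consider "f1 t > f2 t" | "f1 t < f2 t" | "f1 t = f2 t" by linarith
  then show ?thesis
  proof cases
    case 1
    have ev: "\<forall>\<^sub>F y in nhds t. max (f1 y) (f2 y) = f1 y"
      using ev_nhds_less[OF c2 c1 1] by eventually_elim simp
    show ?thesis using 1 d1 DERIV_cong_ev[OF refl ev refl] by simp
  next
    case 2
    have ev: "\<forall>\<^sub>F y in nhds t. max (f1 y) (f2 y) = f2 y"
      using ev_nhds_less[OF c1 c2 2] by eventually_elim simp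
    show ?thesis using 2 d2 DERIV_cong_ev[OF refl ev refl] by simp
  next
    case 3
    have "((\<lambda>y. max (f1 y) (f2 y)) has_real_derivative c1) (at t)"
      by (rule either_deriv[of f1 c1 t f2]) (use d1 d2 same 3 in auto)
    then show ?thesis using 3 by simp
  qed
qed

lemma min_deriv:
  fixes f1 f2 :: "real \<Rightarrow> real"
  assumes d1: "(f1 has_real_derivative c1) (at t)" and d2: "(f2 has_real_derivative c2) (at t)"
    and same: "f1 t = f2 t \<Longrightarrow> c1 = c2"
  shows "((\<lambda>y. min (f1 y) (f2 y)) has_real_derivative (if f1 t \<le> f2 t then c1 else c2)) (at t)"
proof -
  have "((\<lambda>y. max (- f1 y) (- f2 y)) has_real_derivative (if - f1 t \<ge> - f2 t then - c1 else - c2)) (at t)"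
    by (rule max_deriv) (use d1 d2 same in \<open>auto intro: derivative_intros\<close>)
  then have "((\<lambda>y. - max (- f1 y) (- f2 y)) has_real_derivative - (if - f1 t \<ge> - f2 t then - c1 else - c2)) (at t)"
    by (rule DERIV_minus)
  moreover have "(\<lambda>y. - max (- f1 y) (- f2 y)) = (\<lambda>y. min (f1 y) (f2 y))" by (auto simp: max_def min_def)
  ultimately show ?thesis by (auto split: if_splits)
qed

lemma glue_lip:
  fixes \<phi>1 \<phi>2 d :: "real \<Rightarrow> real"
  assumes l1: "lipschitz_on G {0..} \<phi>1" and l2: "lipschitz_on G {0..} \<phi>2"
    and dc: "continuous_on {0..} d" and agree: "\<And>t. t \<ge> 0 \<Longrightarrow> d t = 0 \<Longrightarrow> \<phi>1 t = \<phi>2 t"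
  shows "lipschitz_on G {0..} (\<lambda>t. if d t \<ge> 0 then \<phi>1 t else \<phi>2 t)"
proof -
  define \<phi> where "\<phi> = (\<lambda>t. if d t \<ge> 0 then \<phi>1 t else \<phi>2 t)"
  have G: "G \<ge> 0" using l1 by (simp add: lipschitz_on_def)
  have L1: "\<bar>\<phi>1 y - \<phi>1 x\<bar> \<le> G * \<bar>y - x\<bar>" if "x \<ge> 0" "y \<ge> 0" for x y
    using l1 that unfolding lipschitz_on_def by (auto simp: dist_real_def abs_minus_commute)
  have L2: "\<bar>\<phi>2 y - \<phi>2 x\<bar> \<le> G * \<bar>y - x\<bar>" if "x \<ge> 0" "y \<ge> 0" for x y
    using l2 that unfolding lipschitz_on_def by (auto simp: dist_real_def abs_minus_commute)
  have key: "\<bar>\<phi> y - \<phi> x\<bar> \<le> G * (y - x)" if xy: "0 \<le> x" "x \<le> y" for x y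
  proof -
    have dxy: "continuous_on {x..y} d" using dc xy by (auto intro: continuous_on_subset)
    have split: "\<bar>\<phi> y - \<phi> x\<bar> \<le> G * (y - x)" if z: "x \<le> z" "z \<le> y" "d z = 0" for z
    proof -
      have pz: "\<phi> z = \<phi>1 z" "\<phi> z = \<phi>2 z" using z agree[of z] xy by (auto simp: \<phi>_def)
      have a: "\<bar>\<phi> z - \<phi> x\<bar> \<le> G * (z - x)"
        using L1[of x z] L2[of x z] pz xy z by (auto simp: \<phi>_def)
      have b: "\<bar>\<phi> y - \<phi> z\<bar> \<le> G * (y - z)"
        using L1[of z y] L2[of z y] pz xy z by (auto simp: \<phi>_def)
      have "\<bar>\<phi> y - \<phi> x\<bar> \<le> \<bar>\<phi> y - \<phi> z\<bar> + \<bar>\<phi> z - \<phi> x\<bar>" by arith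
      also have "\<dots> \<le> G * (y - z) + G * (z - x)" using a b by simp
      finally show ?thesis by (simp add: algebra_simps)
    qed
    consider "d x \<ge> 0" "d y \<ge> 0" | "d x < 0" "d y < 0" | "d x \<ge> 0" "d y < 0" | "d x < 0" "d y \<ge> 0"
      by linarith
    then show ?thesis
    proof cases
      case 1 then show ?thesis using L1[of x y] xy by (simp add: \<phi>_def)
    next
      case 2 then show ?thesis using L2[of x y] xy by (simp add: \<phi>_def)
    next
      case 3
      obtain z where "z \<ge> x" "z \<le> y" "d z = 0" using IVT2'[of d y 0 x] 3 xy dxy by auto
      then show ?thesis using split by blast
    next
      case 4
      obtain z where "z \<ge> x" "z \<le> y" "d z = 0" using IVT'[of d x 0 y] 4 xy dxy by auto
      then show ?thesis using split by blast
    qed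
  qed
  show ?thesis unfolding lipschitz_on_def \<phi>_def[symmetric]
  proof (intro conjI G ballI)
    fix x y :: real assume "x \<in> {0..}" "y \<in> {0..}"
    then show "dist (\<phi> x) (\<phi> y) \<le> G * dist x y"
      using key[of x y] key[of y x]
      by (cases x y rule: linorder_cases) (auto simp: dist_real_def abs_minus_commute)
  qed
qed

lemma lip_limit:
  fixes F :: "nat \<Rightarrow> real \<Rightarrow> real"
  assumes l: "\<And>n. lipschitz_on L S (F n)" and lim: "\<And>x. x \<in> S \<Longrightarrow> (\<lambda>n. F n x) \<longlonglongrightarrow> \<phi> x"
  shows "lipschitz_on L S \<phi>"
  unfolding lipschitz_on_def
proof (intro conjI ballI)
  show "0 \<le> L" using l[of 0] by (simp add: lipschitz_on_def)
  fix x y assume x: "x \<in> S" and y: "y \<in> S"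
  have "(\<lambda>n. dist (F n x) (F n y)) \<longlonglongrightarrow> dist (\<phi> x) (\<phi> y)"
    by (intro tendsto_dist lim x y)
  moreover have "\<forall>n. dist (F n x) (F n y) \<le> L * dist x y"
    using l x y by (auto simp: lipschitz_on_def)
  ultimately show "dist (\<phi> x) (\<phi> y) \<le> L * dist x y"
    by (intro tendsto_le[OF trivial_limit_sequentially tendsto_const]) auto
qed

context setting begin

lemma good_max:
  assumes g1: "good \<gamma>1" and g2: "good \<gamma>2"
  shows "good (\<lambda>t. max (\<gamma>1 t) (\<gamma>2 t))"
proof -
  have D1: "DG \<gamma>1" and D2: "DG \<gamma>2" using g1 g2 by (auto simp: good_def)
  have DG: "DG (\<lambda>t. max (\<gamma>1 t) (\<gamma>2 t))" unfolding DG_def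
  proof (intro conjI allI impI)
    show "continuous_on {0..} (\<lambda>t. max (\<gamma>1 t) (\<gamma>2 t))"
      using D1 D2 by (auto simp: DG_def intro!: continuous_intros)
    fix t :: real assume t: "t > 0"
    have "((\<lambda>y. max (\<gamma>1 y) (\<gamma>2 y)) has_real_derivative (if \<gamma>1 t \<ge> \<gamma>2 t then hh t (\<gamma>1 t) else hh t (\<gamma>2 t))) (at t)"
      by (rule max_deriv) (use D1 D2 t in \<open>auto simp: DG_def\<close>)
    moreover have "(if \<gamma>1 t \<ge> \<gamma>2 t then hh t (\<gamma>1 t) else hh t (\<gamma>2 t)) = hh t (max (\<gamma>1 t) (\<gamma>2 t))"
      by (auto simp: max_def)
    ultimately show "((\<lambda>y. max (\<gamma>1 y) (\<gamma>2 y)) has_real_derivative hh t (max (\<gamma>1 t) (\<gamma>2 t))) (at t)"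
      by simp
  qed
  have L: "lipschitz_on G {0..} (\<lambda>t. if \<gamma>1 t - \<gamma>2 t \<ge> 0 then u t (\<gamma>1 t) else u t (\<gamma>2 t))"
    by (rule glue_lip) (use g1 g2 D1 D2 in \<open>auto simp: good_def LU_def DG_def intro!: continuous_intros\<close>)
  have eq: "(\<lambda>t. if \<gamma>1 t - \<gamma>2 t \<ge> 0 then u t (\<gamma>1 t) else u t (\<gamma>2 t)) = (\<lambda>t. u t (max (\<gamma>1 t) (\<gamma>2 t)))"
    by (auto simp: max_def)
  have "LU (\<lambda>t. max (\<gamma>1 t) (\<gamma>2 t))" unfolding LU_def using L[unfolded eq] by simp
  moreover have "NRM (\<lambda>t. max (\<gamma>1 t) (\<gamma>2 t))" using g1 g2 by (auto simp: good_def NRM_def)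
  ultimately show ?thesis using DG by (simp add: good_def)
qed

lemma good_min:
  assumes g1: "good \<gamma>1" and g2: "good \<gamma>2"
  shows "good (\<lambda>t. min (\<gamma>1 t) (\<gamma>2 t))"
proof -
  have D1: "DG \<gamma>1" and D2: "DG \<gamma>2" using g1 g2 by (auto simp: good_def)
  have DG: "DG (\<lambda>t. min (\<gamma>1 t) (\<gamma>2 t))" unfolding DG_def
  proof (intro conjI allI impI)
    show "continuous_on {0..} (\<lambda>t. min (\<gamma>1 t) (\<gamma>2 t))"
      using D1 D2 by (auto simp: DG_def intro!: continuous_intros)
    fix t :: real assume t: "t > 0"
    have "((\<lambda>y. min (\<gamma>1 y) (\<gamma>2 y)) has_real_derivative (if \<gamma>1 t \<le> \<gamma>2 t then hh t (\<gamma>1 t) else hh t (\<gamma>2 t))) (at t)"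
      by (rule min_deriv) (use D1 D2 t in \<open>auto simp: DG_def\<close>)
    moreover have "(if \<gamma>1 t \<le> \<gamma>2 t then hh t (\<gamma>1 t) else hh t (\<gamma>2 t)) = hh t (min (\<gamma>1 t) (\<gamma>2 t))"
      by (auto simp: min_def)
    ultimately show "((\<lambda>y. min (\<gamma>1 y) (\<gamma>2 y)) has_real_derivative hh t (min (\<gamma>1 t) (\<gamma>2 t))) (at t)"
      by simp
  qed
  have L: "lipschitz_on G {0..} (\<lambda>t. if \<gamma>2 t - \<gamma>1 t \<ge> 0 then u t (\<gamma>1 t) else u t (\<gamma>2 t))"
    by (rule glue_lip) (use g1 g2 D1 D2 in \<open>auto simp: good_def LU_def DG_def intro!: continuous_intros\<close>)
  have eq: "(\<lambda>t. if \<gamma>2 t - \<gamma>1 t \<ge> 0 then u t (\<gamma>1 t) else u t (\<gamma>2 t)) = (\<lambda>t. u t (min (\<gamma>1 t) (\<gamma>2 t)))"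
    by (auto simp: min_def)
  have "LU (\<lambda>t. min (\<gamma>1 t) (\<gamma>2 t))" unfolding LU_def using L[unfolded eq] by simp
  moreover have "NRM (\<lambda>t. min (\<gamma>1 t) (\<gamma>2 t))" using g1 g2 by (auto simp: good_def NRM_def)
  ultimately show ?thesis using DG by (simp add: good_def)
qed

lemma good_limit:
  assumes g: "\<And>n. good (\<gamma>s n)" and lim: "\<And>t. (\<lambda>n. \<gamma>s n t) \<longlonglongrightarrow> \<eta> t"
  shows "good \<eta>"
proof -
  have DGn: "DG (\<gamma>s n)" for n using g by (simp add: good_def)
  have IGn: "IG (\<gamma>s n)" for n using DG_imp_IG[OF DGn] .
  have lipn: "lipschitz_on M {0..} (\<gamma>s n)" for n by (rule DG_lip[OF DGn])
  have lipeta: "lipschitz_on M {0..} \<eta>" by (rule lip_limit[OF lipn lim])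
  have c: "continuous_on {0..} \<eta>" by (rule lipschitz_on_continuous_on[OF lipeta])
  have IG: "IG \<eta>" unfolding IG_def
  proof (intro conjI c allI impI)
    fix t :: real assume t: "t \<ge> 0"
    let ?\<phi> = "\<lambda>n s. hh s (\<gamma>s n s)"
    have int: "(\<lambda>k. integral {0..t} (?\<phi> k)) \<longlonglongrightarrow> integral {0..t} (\<lambda>s. hh s (\<eta> s))"
    proof (rule dominated_convergence(2))
      fix k
      show "?\<phi> k integrable_on {0..t}"
        by (rule integrable_continuous_interval, rule phi_cont)
           (use DGn[of k] in \<open>auto simp: DG_def intro: continuous_on_subset\<close>)
      show "(\<lambda>x. M) integrable_on {0..t}" by (rule integrable_continuous_interval) simp
      fix x assume "x \<in> {0..t}"
      then show "norm (?\<phi> k x) \<le> M" using hbound[of x] by auto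
    next
      fix x :: real assume x: "x \<in> {0..t}"
      have "((\<lambda>k. (\<lambda>(t,x). deriv f (u t x)) (x, \<gamma>s k x)) \<longlonglongrightarrow> (\<lambda>(t,x). deriv f (u t x)) (x, \<eta> x))"
        by (rule continuous_on_tendsto_compose[OF hcont]) (use x lim in \<open>auto intro!: tendsto_intros\<close>)
      then show "(\<lambda>k. ?\<phi> k x) \<longlonglongrightarrow> hh x (\<eta> x)" by simp
    qed
    have "(\<lambda>k. \<gamma>s k t) \<longlonglongrightarrow> \<eta> 0 + integral {0..t} (\<lambda>s. hh s (\<eta> s))"
    proof -
      have "(\<lambda>k. \<gamma>s k 0 + integral {0..t} (?\<phi> k)) \<longlonglongrightarrow> \<eta> 0 + integral {0..t} (\<lambda>s. hh s (\<eta> s))"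
        by (intro tendsto_add lim int)
      moreover have "\<gamma>s k t = \<gamma>s k 0 + integral {0..t} (?\<phi> k)" for k
        using IGn[of k] t unfolding IG_def by blast
      ultimately show ?thesis by simp
    qed
    then show "\<eta> t = \<eta> 0 + integral {0..t} (\<lambda>s. hh s (\<eta> s))"
      using lim[of t] LIMSEQ_unique by blast
  qed
  have LU: "LU \<eta>" unfolding LU_def
  proof (rule lip_limit)
    show "lipschitz_on G {0..} (\<lambda>s. u s (\<gamma>s n s))" for n using g[of n] by (simp add: good_def LU_def)
    fix x :: real assume x: "x \<in> {0..}"
    have "((\<lambda>k. (\<lambda>(t,x). u t x) (x, \<gamma>s k x)) \<longlonglongrightarrow> (\<lambda>(t,x). u t x) (x, \<eta> x))"
      by (rule continuous_on_tendsto_compose[OF ucont]) (use x lim in \<open>auto intro!: tendsto_intros\<close>)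
    then show "(\<lambda>k. u x (\<gamma>s k x)) \<longlonglongrightarrow> u x (\<eta> x)" by simp
  qed
  have NRM: "NRM \<eta>" unfolding NRM_def
  proof (intro allI impI)
    fix t :: real assume t: "t < 0"
    have "\<gamma>s n t = \<gamma>s n 0" for n using g[of n] t by (simp add: good_def NRM_def)
    then show "\<eta> t = \<eta> 0" using lim[of t] lim[of 0] LIMSEQ_unique by auto
  qed
  show ?thesis using IG_imp_DG[OF IG] LU NRM by (simp add: good_def)
qed

end

context setting begin

definition "psi \<gamma> = integral {0..T} \<gamma>"

lemma good_cont: "good \<gamma> \<Longrightarrow> continuous_on {0..} \<gamma>"
  by (simp add: good_def DG_def)

lemma good_lip: "good \<gamma> \<Longrightarrow> lipschitz_on M {0..} \<gamma>"
  by (simp add: good_def DG_lip)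

lemma good_lipD: "good \<gamma> \<Longrightarrow> x \<ge> 0 \<Longrightarrow> y \<ge> 0 \<Longrightarrow> \<bar>\<gamma> y - \<gamma> x\<bar> \<le> M * \<bar>y - x\<bar>"
  using good_lip[of \<gamma>] unfolding lipschitz_on_def by (auto simp: dist_real_def abs_minus_commute)

lemma good_int: assumes "good \<gamma>" shows "\<gamma> integrable_on {0..T}"
  by (rule integrable_continuous_interval, rule continuous_on_subset[OF good_cont[OF assms]]) auto

lemma psi_mono_gen:
  fixes \<gamma> \<eta> :: "real \<Rightarrow> real"
  assumes "continuous_on {0..T} \<gamma>" "continuous_on {0..T} \<eta>" "\<And>t. \<gamma> t \<le> \<eta> t"
  shows "integral {0..T} \<gamma> \<le> integral {0..T} \<eta>"
  by (rule Henstock_Kurzweil_Integration.integral_le) (use assms in \<open>auto intro: integrable_continuous_interval\<close>)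

lemma psi_mono: "good \<gamma> \<Longrightarrow> good \<eta> \<Longrightarrow> \<gamma> \<le> \<eta> \<Longrightarrow> psi \<gamma> \<le> psi \<eta>"
  unfolding psi_def
  by (rule psi_mono_gen) (auto simp: le_fun_def dest!: good_cont intro: continuous_on_subset)

lemma psi_strict:
  assumes g: "good \<gamma>" "good \<eta>" and le: "\<gamma> \<le> \<eta>" and eq: "psi \<gamma> = psi \<eta>"
  shows "\<gamma> = \<eta>"
proof -
  let ?d = "\<lambda>t. \<eta> t - \<gamma> t"
  have cd: "continuous_on {0..} ?d" using g by (auto dest!: good_cont intro!: continuous_intros)
  have "(?d has_integral (psi \<eta> - psi \<gamma>)) {0..T}"
    unfolding psi_def by (intro has_integral_diff integrable_integral good_int g)
  then have hi: "(?d has_integral 0) (cbox 0 T)" using eq by simp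
  have z1: "?d t = 0" if t: "t \<in> {0..T}" for t
  proof (rule has_integral_0_cbox_imp_0[OF _ _ hi])
    show "continuous_on (cbox 0 T) ?d" using cd by (auto intro: continuous_on_subset)
    show "box 0 T \<noteq> {}" using Tpos by simp
    show "t \<in> cbox 0 T" using t by simp
  qed (use le in \<open>auto simp: le_fun_def\<close>)
  have z2: "?d t = 0" if t: "t > T" for t
  proof -
    have "?d t = ?d T"
    proof (rule DERIV_isconst_end[OF t])
      show "continuous_on {T..t} ?d" using cd Tpos by (auto intro: continuous_on_subset)
      fix x assume x: "T < x" "x < t"
      have d1: "(\<eta> has_real_derivative hh x (\<eta> x)) (at x)" using g(2) x Tpos by (auto simp: good_def DG_def)
      have d2: "(\<gamma> has_real_derivative hh x (\<gamma> x)) (at x)" using g(1) x Tpos by (auto simp: good_def DG_def)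
      show "(?d has_real_derivative 0) (at x)"
        using DERIV_diff[OF d1 d2] usupp[of x] x by simp
    qed
    then show ?thesis using z1[of T] Tpos by simp
  qed
  have "?d t = 0" for t
  proof (cases "t < 0")
    case True
    then have "?d t = ?d 0" using g by (simp add: good_def NRM_def)
    then show ?thesis using z1[of 0] Tpos by simp
  next
    case False
    then show ?thesis using z1[of t] z2[of t] by (cases "t \<le> T") auto
  qed
  then show ?thesis by (auto simp: fun_eq_iff)
qed

lemma psi_bounds:
  assumes g: "good \<gamma>"
  shows "T * (\<gamma> 0 - M * T) \<le> psi \<gamma>" "psi \<gamma> \<le> T * (\<gamma> 0 + M * T)"
proof -
  have c: "continuous_on {0..T} \<gamma>" using good_cont[OF g] by (auto intro: continuous_on_subset)
  have b: "\<bar>\<gamma> t - \<gamma> 0\<bar> \<le> M * T" if "t \<in> {0..T}" for t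
    using good_lipD[OF g, of 0 t] that Mnn by (auto intro: order_trans mult_left_mono)
  have b1: "\<gamma> 0 - M * T \<le> \<gamma> t" "\<gamma> t \<le> \<gamma> 0 + M * T" if "t \<in> {0..T}" for t
    using b[OF that] unfolding abs_le_iff by linarith+
  have "integral {0..T} (\<lambda>t. \<gamma> 0 - M * T) \<le> integral {0..T} \<gamma>"
    by (rule Henstock_Kurzweil_Integration.integral_le) (use c b1 in \<open>auto intro: integrable_continuous_interval\<close>)
  then show "T * (\<gamma> 0 - M * T) \<le> psi \<gamma>" using Tpos by (simp add: psi_def)
  have "integral {0..T} \<gamma> \<le> integral {0..T} (\<lambda>t. \<gamma> 0 + M * T)"
    by (rule Henstock_Kurzweil_Integration.integral_le) (use c b1 in \<open>auto intro: integrable_continuous_interval\<close>)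
  then show "psi \<gamma> \<le> T * (\<gamma> 0 + M * T)" using Tpos by (simp add: psi_def)
qed

lemma psi_lim:
  assumes g: "\<And>n. good (\<rho> n)" "good \<eta>" and lim: "\<And>t. (\<lambda>n. \<rho> n t) \<longlonglongrightarrow> \<eta> t"
    and bnd: "\<And>n t. \<bar>\<rho> n t\<bar> \<le> B t" and cB: "continuous_on {0..T} B"
  shows "(\<lambda>n. psi (\<rho> n)) \<longlonglongrightarrow> psi \<eta>"
  unfolding psi_def
  by (rule dominated_convergence(2)[of _ _ B]) (use g good_int bnd cB integrable_continuous_interval lim in auto)

definition "chainset = {C. (\<forall>\<gamma>\<in>C. good \<gamma>) \<and> (\<forall>\<gamma>\<in>C. \<forall>\<eta>\<in>C. \<gamma> \<le> \<eta> \<or> \<eta> \<le> \<gamma>)}"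

lemma max_chain_exists:
  obtains Ch where "\<forall>\<gamma>\<in>Ch. good \<gamma>" "\<forall>\<gamma>\<in>Ch. \<forall>\<eta>\<in>Ch. \<gamma> \<le> \<eta> \<or> \<eta> \<le> \<gamma>"
    "\<And>\<xi>. good \<xi> \<Longrightarrow> (\<forall>\<gamma>\<in>Ch. \<gamma> \<le> \<xi> \<or> \<xi> \<le> \<gamma>) \<Longrightarrow> \<xi> \<in> Ch"
proof -
  have "\<forall>C\<in>chains chainset. \<Union>C \<in> chainset"
  proof
    fix C assume C: "C \<in> chains chainset"
    show "\<Union>C \<in> chainset" unfolding chainset_def
    proof (intro CollectI conjI ballI)
      fix \<gamma> assume "\<gamma> \<in> \<Union>C"
      then show "good \<gamma>" using C by (auto simp: chains_def chainset_def)
    next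
      fix \<gamma> \<eta> assume "\<gamma> \<in> \<Union>C" "\<eta> \<in> \<Union>C"
      then obtain A B where AB: "A \<in> C" "B \<in> C" "\<gamma> \<in> A" "\<eta> \<in> B" by auto
      then have "A \<subseteq> B \<or> B \<subseteq> A" using chainsD[OF C] by blast
      then show "\<gamma> \<le> \<eta> \<or> \<eta> \<le> \<gamma>" using AB C chainsD2[OF C] by (auto simp: chainset_def)
    qed
  qed
  from Zorn_Lemma[OF this] obtain Ch where Ch: "Ch \<in> chainset" "\<forall>X\<in>chainset. Ch \<subseteq> X \<longrightarrow> X = Ch"
    by blast
  show ?thesis
  proof (rule that)
    show "\<forall>\<gamma>\<in>Ch. good \<gamma>" "\<forall>\<gamma>\<in>Ch. \<forall>\<eta>\<in>Ch. \<gamma> \<le> \<eta> \<or> \<eta> \<le> \<gamma>" using Ch(1) by (auto simp: chainset_def)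
    fix \<xi> assume "good \<xi>" "\<forall>\<gamma>\<in>Ch. \<gamma> \<le> \<xi> \<or> \<xi> \<le> \<gamma>"
    then have "insert \<xi> Ch \<in> chainset" using Ch(1) by (auto simp: chainset_def)
    then have "insert \<xi> Ch = Ch" using Ch(2) by blast
    then show "\<xi> \<in> Ch" by blast
  qed
qed

end

locale chain_setting = setting +
  fixes Ch :: "(real \<Rightarrow> real) set"
  assumes Ch_good: "\<And>\<gamma>. \<gamma> \<in> Ch \<Longrightarrow> good \<gamma>"
    and Ch_cmp: "\<And>\<gamma> \<eta>. \<gamma> \<in> Ch \<Longrightarrow> \<eta> \<in> Ch \<Longrightarrow> \<gamma> \<le> \<eta> \<or> \<eta> \<le> \<gamma>"
    and Ch_max: "\<And>\<xi>. good \<xi> \<Longrightarrow> (\<forall>\<gamma>\<in>Ch. \<gamma> \<le> \<xi> \<or> \<xi> \<le> \<gamma>) \<Longrightarrow> \<xi> \<in> Ch"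
    and dense: "\<And>t x e. t \<ge> 0 \<Longrightarrow> e > 0 \<Longrightarrow> \<exists>t1 x1 \<zeta>. t1 \<ge> 0 \<and> \<bar>t1 - t\<bar> < e \<and> \<bar>x1 - x\<bar> < e \<and> good \<zeta> \<and> \<zeta> t1 = x1"
begin

lemma chain_lim_inc:
  assumes \<rho>: "\<And>n. \<rho> n \<in> Ch" "\<And>n. \<rho> n \<le> \<rho> (Suc n)" and lim: "\<And>t. (\<lambda>n. \<rho> n t) \<longlonglongrightarrow> \<eta> t"
  shows "\<eta> \<in> Ch" "(\<lambda>n. psi (\<rho> n)) \<longlonglongrightarrow> psi \<eta>"
proof -
  have mono: "\<rho> m \<le> \<rho> n" if "m \<le> n" for m n
    using lift_Suc_mono_le[of \<rho>, OF \<rho>(2) that] .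
  have le: "\<rho> n t \<le> \<eta> t" for n t
    by (rule LIMSEQ_le_const[OF lim]) (use mono in \<open>auto simp: le_fun_def\<close>)
  have g: "good \<eta>" by (rule good_limit[OF Ch_good[OF \<rho>(1)] lim])
  have "\<forall>\<xi>\<in>Ch. \<xi> \<le> \<eta> \<or> \<eta> \<le> \<xi>"
  proof
    fix \<xi> assume \<xi>: "\<xi> \<in> Ch"
    show "\<xi> \<le> \<eta> \<or> \<eta> \<le> \<xi>"
    proof (cases "\<exists>n. \<xi> \<le> \<rho> n")
      case True
      then obtain n where n: "\<xi> \<le> \<rho> n" by blast
      have "\<xi> t \<le> \<eta> t" for t
      proof (rule LIMSEQ_le_const[OF lim], intro exI[of _ n] allI impI)
        fix m assume "n \<le> m"
        then show "\<xi> t \<le> \<rho> m t" using n mono[of n m] by (auto simp: le_fun_def intro: order_trans)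
      qed
      then show ?thesis by (simp add: le_fun_def)
    next
      case False
      then have "\<rho> n \<le> \<xi>" for n using Ch_cmp[OF \<xi> \<rho>(1)[of n]] by blast
      then have "\<eta> t \<le> \<xi> t" for t
        by (intro LIMSEQ_le_const2[OF lim]) (auto simp: le_fun_def)
      then show ?thesis by (simp add: le_fun_def)
    qed
  qed
  then show "\<eta> \<in> Ch" using Ch_max[OF g] by blast
  show "(\<lambda>n. psi (\<rho> n)) \<longlonglongrightarrow> psi \<eta>"
  proof (rule psi_lim[OF Ch_good[OF \<rho>(1)] g lim])
    show "continuous_on {0..T} (\<lambda>t. \<bar>\<rho> 0 t\<bar> + \<bar>\<eta> t\<bar>)"
      using good_cont[OF Ch_good[OF \<rho>(1)[of 0]]] good_cont[OF g]
      by (auto intro!: continuous_intros intro: continuous_on_subset)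
    fix n t
    have "\<rho> 0 t \<le> \<rho> n t" using mono[of 0 n] by (simp add: le_fun_def)
    then show "\<bar>\<rho> n t\<bar> \<le> \<bar>\<rho> 0 t\<bar> + \<bar>\<eta> t\<bar>" using le[of n t] by linarith
  qed
qed

lemma chain_lim_dec:
  assumes \<rho>: "\<And>n. \<rho> n \<in> Ch" "\<And>n. \<rho> (Suc n) \<le> \<rho> n" and lim: "\<And>t. (\<lambda>n. \<rho> n t) \<longlonglongrightarrow> \<eta> t"
  shows "\<eta> \<in> Ch" "(\<lambda>n. psi (\<rho> n)) \<longlonglongrightarrow> psi \<eta>"
proof -
  have mono: "\<rho> n \<le> \<rho> m" if "m \<le> n" for m n
    using lift_Suc_antimono_le[of \<rho>, OF \<rho>(2) that] .
  have le: "\<eta> t \<le> \<rho> n t" for n t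
    by (rule LIMSEQ_le_const2[OF lim]) (use mono in \<open>auto simp: le_fun_def\<close>)
  have g: "good \<eta>" by (rule good_limit[OF Ch_good[OF \<rho>(1)] lim])
  have "\<forall>\<xi>\<in>Ch. \<xi> \<le> \<eta> \<or> \<eta> \<le> \<xi>"
  proof
    fix \<xi> assume \<xi>: "\<xi> \<in> Ch"
    show "\<xi> \<le> \<eta> \<or> \<eta> \<le> \<xi>"
    proof (cases "\<exists>n. \<rho> n \<le> \<xi>")
      case True
      then obtain n where n: "\<rho> n \<le> \<xi>" by blast
      have "\<eta> t \<le> \<xi> t" for t
      proof (rule LIMSEQ_le_const2[OF lim], intro exI[of _ n] allI impI)
        fix m assume "n \<le> m"
        then show "\<rho> m t \<le> \<xi> t" using n mono[of n m] by (auto simp: le_fun_def intro: order_trans)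
      qed
      then show ?thesis by (simp add: le_fun_def)
    next
      case False
      then have "\<xi> \<le> \<rho> n" for n using Ch_cmp[OF \<xi> \<rho>(1)[of n]] by blast
      then have "\<xi> t \<le> \<eta> t" for t
        by (intro LIMSEQ_le_const[OF lim]) (auto simp: le_fun_def)
      then show ?thesis by (simp add: le_fun_def)
    qed
  qed
  then show "\<eta> \<in> Ch" using Ch_max[OF g] by blast
  show "(\<lambda>n. psi (\<rho> n)) \<longlonglongrightarrow> psi \<eta>"
  proof (rule psi_lim[OF Ch_good[OF \<rho>(1)] g lim])
    show "continuous_on {0..T} (\<lambda>t. \<bar>\<rho> 0 t\<bar> + \<bar>\<eta> t\<bar>)"
      using good_cont[OF Ch_good[OF \<rho>(1)[of 0]]] good_cont[OF g]
      by (auto intro!: continuous_intros intro: continuous_on_subset)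
    fix n t
    have "\<rho> n t \<le> \<rho> 0 t" using mono[of 0 n] by (simp add: le_fun_def)
    then show "\<bar>\<rho> n t\<bar> \<le> \<bar>\<rho> 0 t\<bar> + \<bar>\<eta> t\<bar>" using le[of t n] by linarith
  qed
qed

lemma sup_chain:
  assumes L: "L \<subseteq> Ch" "L \<noteq> {}" and \<xi>c: "continuous_on {0..T} \<xi>" and \<xi>b0: "\<And>\<gamma>. \<gamma> \<in> L \<Longrightarrow> \<gamma> \<le> \<xi>"
  obtains \<eta> \<rho> where "\<eta> \<in> Ch" "\<And>\<gamma>. \<gamma> \<in> L \<Longrightarrow> \<gamma> \<le> \<eta>" "\<And>n. \<rho> n \<in> L"
    "\<And>t. (\<lambda>n. \<rho> n t) \<longlonglongrightarrow> \<eta> t" "psi \<eta> = Sup (psi ` L)"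
proof -
  have \<xi>b: "\<gamma> t \<le> \<xi> t" if "\<gamma> \<in> L" for \<gamma> t using \<xi>b0[OF that] by (simp add: le_fun_def)
  have psiL: "psi \<gamma> \<le> integral {0..T} \<xi>" if "\<gamma> \<in> L" for \<gamma>
  proof -
    have cg: "continuous_on {0..T} \<gamma>"
      by (rule continuous_on_subset[OF good_cont[OF Ch_good]]) (use that L in auto)
    show ?thesis unfolding psi_def by (rule psi_mono_gen[OF cg \<xi>c]) (use \<xi>b that in auto)
  qed
  have bdd: "bdd_above (psi ` L)" using psiL by (auto simp: bdd_above_def)
  define s where "s = Sup (psi ` L)"
  have "\<exists>\<gamma>\<in>L. s - 1 / Suc n < psi \<gamma>" for n
  proof -
    have "s - 1 / Suc n < Sup (psi ` L)" by (simp add: s_def)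
    then show ?thesis using less_cSup_iff[of "psi ` L"] L bdd by auto
  qed
  then obtain g where g: "\<And>n. g n \<in> L" "\<And>n. s - 1 / Suc n < psi (g n)" by metis
  define \<rho> where "\<rho> = rec_nat (g 0) (\<lambda>n r. if r \<le> g (Suc n) then g (Suc n) else r)"
  have \<rho>0: "\<rho> 0 = g 0" and \<rho>S: "\<rho> (Suc n) = (if \<rho> n \<le> g (Suc n) then g (Suc n) else \<rho> n)" for n
    by (simp_all add: \<rho>_def)
  have \<rho>L: "\<rho> n \<in> L" for n by (induction n) (use g \<rho>0 \<rho>S in auto)
  have \<rho>Ch: "\<rho> n \<in> Ch" for n using \<rho>L L by auto
  have \<rho>inc: "\<rho> n \<le> \<rho> (Suc n)" for n using \<rho>S[of n] by auto
  have g\<rho>: "g n \<le> \<rho> n" for n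
  proof (cases n)
    case 0 then show ?thesis by (simp add: \<rho>0)
  next
    case (Suc m)
    show ?thesis
    proof (cases "\<rho> m \<le> g (Suc m)")
      case True then show ?thesis using Suc \<rho>S[of m] by simp
    next
      case False
      then have "g (Suc m) \<le> \<rho> m" using Ch_cmp[of "\<rho> m" "g (Suc m)"] \<rho>Ch g(1) L by blast
      then show ?thesis using Suc \<rho>S[of m] False by simp
    qed
  qed
  have conv: "\<exists>l. (\<lambda>n. \<rho> n t) \<longlonglongrightarrow> l" for t
  proof -
    have "incseq (\<lambda>n. \<rho> n t)" using \<rho>inc by (intro incseq_SucI) (simp add: le_fun_def)
    moreover have "\<forall>i. \<rho> i t \<le> \<xi> t" using \<xi>b \<rho>L by blast
    ultimately show ?thesis by (rule incseq_convergent) blast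
  qed
  define \<eta> where "\<eta> t = lim (\<lambda>n. \<rho> n t)" for t
  have lim: "(\<lambda>n. \<rho> n t) \<longlonglongrightarrow> \<eta> t" for t
    using conv[of t] unfolding \<eta>_def by (metis limI)
  have \<eta>Ch: "\<eta> \<in> Ch" and psilim: "(\<lambda>n. psi (\<rho> n)) \<longlonglongrightarrow> psi \<eta>"
    using chain_lim_inc[OF \<rho>Ch \<rho>inc lim] by auto
  have \<rho>le: "\<rho> n \<le> \<eta>" for n
  proof -
    have "\<rho> n t \<le> \<eta> t" for t
    proof (rule LIMSEQ_le_const[OF lim], intro exI[of _ n] allI impI)
      fix m assume "n \<le> m"
      then show "\<rho> n t \<le> \<rho> m t" using lift_Suc_mono_le[of \<rho>, OF \<rho>inc] by (auto simp: le_fun_def)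
    qed
    then show ?thesis by (simp add: le_fun_def)
  qed
  have up: "psi \<eta> \<le> s"
    by (rule LIMSEQ_le_const2[OF psilim]) (use \<rho>L bdd in \<open>auto simp: s_def intro!: cSup_upper\<close>)
  have lo: "s - 1 / Suc n < psi \<eta>" for n
  proof -
    have "psi (g n) \<le> psi (\<rho> n)" using psi_mono[OF _ _ g\<rho>] Ch_good g(1) \<rho>Ch L by blast
    moreover have "psi (\<rho> n) \<le> psi \<eta>" using psi_mono[OF _ _ \<rho>le] Ch_good \<rho>Ch \<eta>Ch by blast
    ultimately show ?thesis using g(2)[of n] by linarith
  qed
  have eq: "psi \<eta> = s"
  proof (rule ccontr)
    assume "psi \<eta> \<noteq> s"
    then have "0 < s - psi \<eta>" using up by simp
    then obtain n where "inverse (real (Suc n)) < s - psi \<eta>" using reals_Archimedean by blast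
    then have "1 / Suc n < s - psi \<eta>" by (simp add: inverse_eq_divide)
    then show False using lo[of n] by simp
  qed
  have below: "\<gamma> \<le> \<eta>" if \<gamma>: "\<gamma> \<in> L" for \<gamma>
  proof -
    have "\<gamma> \<le> \<eta> \<or> \<eta> \<le> \<gamma>" using Ch_cmp[of \<gamma> \<eta>] \<gamma> L \<eta>Ch by blast
    moreover have "\<gamma> = \<eta>" if le: "\<eta> \<le> \<gamma>"
    proof -
      have "psi \<eta> \<le> psi \<gamma>" using psi_mono[OF _ _ le] Ch_good \<gamma> L \<eta>Ch by blast
      moreover have "psi \<gamma> \<le> s" using \<gamma> bdd by (auto simp: s_def intro!: cSup_upper)
      ultimately have "psi \<eta> = psi \<gamma>" using eq by simp
      then show ?thesis using psi_strict[OF _ _ le] Ch_good \<gamma> L \<eta>Ch by (metis subsetD)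
    qed
    ultimately show ?thesis by auto
  qed
  show ?thesis using that[OF \<eta>Ch below \<rho>L lim] eq s_def by blast
qed

lemma inf_chain:
  assumes L: "L \<subseteq> Ch" "L \<noteq> {}" and \<xi>c: "continuous_on {0..T} \<xi>" and \<xi>b0: "\<And>\<gamma>. \<gamma> \<in> L \<Longrightarrow> \<xi> \<le> \<gamma>"
  obtains \<eta> \<rho> where "\<eta> \<in> Ch" "\<And>\<gamma>. \<gamma> \<in> L \<Longrightarrow> \<eta> \<le> \<gamma>" "\<And>n. \<rho> n \<in> L"
    "\<And>t. (\<lambda>n. \<rho> n t) \<longlonglongrightarrow> \<eta> t" "psi \<eta> = Inf (psi ` L)"
proof -
  have \<xi>b: "\<xi> t \<le> \<gamma> t" if "\<gamma> \<in> L" for \<gamma> t using \<xi>b0[OF that] by (simp add: le_fun_def)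
  have psiL: "integral {0..T} \<xi> \<le> psi \<gamma>" if "\<gamma> \<in> L" for \<gamma>
  proof -
    have cg: "continuous_on {0..T} \<gamma>"
      by (rule continuous_on_subset[OF good_cont[OF Ch_good]]) (use that L in auto)
    show ?thesis unfolding psi_def by (rule psi_mono_gen[OF \<xi>c cg]) (use \<xi>b that in auto)
  qed
  have bdd: "bdd_below (psi ` L)" using psiL by (auto simp: bdd_below_def)
  define s where "s = Inf (psi ` L)"
  have "\<exists>\<gamma>\<in>L. psi \<gamma> < s + 1 / Suc n" for n
  proof -
    have "Inf (psi ` L) < s + 1 / Suc n" by (simp add: s_def)
    then show ?thesis using cInf_less_iff[of "psi ` L"] L bdd by auto
  qed
  then obtain g where g: "\<And>n. g n \<in> L" "\<And>n. psi (g n) < s + 1 / Suc n" by metis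
  define \<rho> where "\<rho> = rec_nat (g 0) (\<lambda>n r. if g (Suc n) \<le> r then g (Suc n) else r)"
  have \<rho>0: "\<rho> 0 = g 0" and \<rho>S: "\<rho> (Suc n) = (if g (Suc n) \<le> \<rho> n then g (Suc n) else \<rho> n)" for n
    by (simp_all add: \<rho>_def)
  have \<rho>L: "\<rho> n \<in> L" for n by (induction n) (use g \<rho>0 \<rho>S in auto)
  have \<rho>Ch: "\<rho> n \<in> Ch" for n using \<rho>L L by auto
  have \<rho>dec: "\<rho> (Suc n) \<le> \<rho> n" for n using \<rho>S[of n] by auto
  have g\<rho>: "\<rho> n \<le> g n" for n
  proof (cases n)
    case 0 then show ?thesis by (simp add: \<rho>0)
  next
    case (Suc m)
    show ?thesis
    proof (cases "g (Suc m) \<le> \<rho> m")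
      case True then show ?thesis using Suc \<rho>S[of m] by simp
    next
      case False
      then have "\<rho> m \<le> g (Suc m)" using Ch_cmp[of "\<rho> m" "g (Suc m)"] \<rho>Ch g(1) L by blast
      then show ?thesis using Suc \<rho>S[of m] False by simp
    qed
  qed
  have conv: "\<exists>l. (\<lambda>n. \<rho> n t) \<longlonglongrightarrow> l" for t
  proof -
    have "decseq (\<lambda>n. \<rho> n t)" using \<rho>dec by (intro decseq_SucI) (simp add: le_fun_def)
    moreover have "\<forall>i. \<xi> t \<le> \<rho> i t" using \<xi>b \<rho>L by blast
    ultimately show ?thesis by (rule decseq_convergent) blast
  qed
  define \<eta> where "\<eta> t = lim (\<lambda>n. \<rho> n t)" for t
  have lim: "(\<lambda>n. \<rho> n t) \<longlonglongrightarrow> \<eta> t" for t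
    using conv[of t] unfolding \<eta>_def by (metis limI)
  have \<eta>Ch: "\<eta> \<in> Ch" and psilim: "(\<lambda>n. psi (\<rho> n)) \<longlonglongrightarrow> psi \<eta>"
    using chain_lim_dec[OF \<rho>Ch \<rho>dec lim] by auto
  have \<rho>le: "\<eta> \<le> \<rho> n" for n
  proof -
    have "\<eta> t \<le> \<rho> n t" for t
    proof (rule LIMSEQ_le_const2[OF lim], intro exI[of _ n] allI impI)
      fix m assume "n \<le> m"
      then show "\<rho> m t \<le> \<rho> n t" using lift_Suc_antimono_le[of \<rho>, OF \<rho>dec] by (auto simp: le_fun_def)
    qed
    then show ?thesis by (simp add: le_fun_def)
  qed
  have up: "s \<le> psi \<eta>"
    by (rule LIMSEQ_le_const[OF psilim]) (use \<rho>L bdd in \<open>auto simp: s_def intro!: cInf_lower\<close>)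
  have lo: "psi \<eta> < s + 1 / Suc n" for n
  proof -
    have "psi (\<rho> n) \<le> psi (g n)" using psi_mono[OF _ _ g\<rho>] Ch_good g(1) \<rho>Ch L by blast
    moreover have "psi \<eta> \<le> psi (\<rho> n)" using psi_mono[OF _ _ \<rho>le] Ch_good \<rho>Ch \<eta>Ch by blast
    ultimately show ?thesis using g(2)[of n] by linarith
  qed
  have eq: "psi \<eta> = s"
  proof (rule ccontr)
    assume "psi \<eta> \<noteq> s"
    then have "0 < psi \<eta> - s" using up by simp
    then obtain n where "inverse (real (Suc n)) < psi \<eta> - s" using reals_Archimedean by blast
    then have "1 / Suc n < psi \<eta> - s" by (simp add: inverse_eq_divide)
    then show False using lo[of n] by simp
  qed
  have below: "\<eta> \<le> \<gamma>" if \<gamma>: "\<gamma> \<in> L" for \<gamma>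
  proof -
    have "\<gamma> \<le> \<eta> \<or> \<eta> \<le> \<gamma>" using Ch_cmp[of \<gamma> \<eta>] \<gamma> L \<eta>Ch by blast
    moreover have "\<gamma> = \<eta>" if le: "\<gamma> \<le> \<eta>"
    proof -
      have "psi \<gamma> \<le> psi \<eta>" using psi_mono[OF _ _ le] Ch_good \<gamma> L \<eta>Ch by blast
      moreover have "s \<le> psi \<gamma>" using \<gamma> bdd by (auto simp: s_def intro!: cInf_lower)
      ultimately have "psi \<eta> = psi \<gamma>" using eq by simp
      then show ?thesis using psi_strict[OF _ _ le] Ch_good \<gamma> L \<eta>Ch by (metis subsetD)
    qed
    ultimately show ?thesis by auto
  qed
  show ?thesis using that[OF \<eta>Ch below \<rho>L lim] eq s_def by blast
qed

end

context chain_setting begin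

lemma good_dev:
  assumes g: "good \<gamma>" and t0: "t0 \<ge> 0"
  shows "\<bar>\<gamma> t - \<gamma> t0\<bar> \<le> M * (\<bar>t\<bar> + \<bar>t0\<bar>)"
proof -
  have eq: "\<gamma> t = \<gamma> (max 0 t)" using g by (auto simp: good_def NRM_def max_def)
  have "\<bar>\<gamma> (max 0 t) - \<gamma> t0\<bar> \<le> M * \<bar>max 0 t - t0\<bar>"
    using good_lipD[OF g t0, of "max 0 t"] by simp
  also have "\<dots> \<le> M * (\<bar>t\<bar> + \<bar>t0\<bar>)" using Mnn by (intro mult_left_mono) (auto simp: max_def)
  finally show ?thesis using eq by simp
qed

lemma coverage:
  assumes t0: "t0 \<ge> 0"
  shows "\<exists>\<gamma>\<in>Ch. \<gamma> t0 = x0"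
proof (rule ccontr)
  assume "\<not> (\<exists>\<gamma>\<in>Ch. \<gamma> t0 = x0)"
  then have ne: "\<And>\<gamma>. \<gamma> \<in> Ch \<Longrightarrow> \<gamma> t0 \<noteq> x0" by blast
  define L where "L = {\<gamma>\<in>Ch. \<gamma> t0 < x0}"
  define U where "U = {\<gamma>\<in>Ch. \<gamma> t0 > x0}"
  have LU: "\<gamma> \<in> L \<or> \<gamma> \<in> U" if "\<gamma> \<in> Ch" for \<gamma>
    using ne[OF that] that by (auto simp: L_def U_def)
  have exL: "\<exists>\<eta>. \<eta> \<in> L \<and> (\<forall>\<gamma>\<in>L. \<gamma> \<le> \<eta>)" if Lne: "L \<noteq> {}"
  proof -
    have sub: "L \<subseteq> Ch" by (auto simp: L_def)
    have c: "continuous_on {0..T} (\<lambda>t. x0 + M * (\<bar>t\<bar> + \<bar>t0\<bar>))" by (intro continuous_intros)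
    have b: "\<gamma> \<le> (\<lambda>t. x0 + M * (\<bar>t\<bar> + \<bar>t0\<bar>))" if "\<gamma> \<in> L" for \<gamma>
    proof -
      have \<gamma>Ch: "\<gamma> \<in> Ch" and lt: "\<gamma> t0 < x0" using that by (auto simp: L_def)
      show ?thesis unfolding le_fun_def
      proof
        fix t show "\<gamma> t \<le> x0 + M * (\<bar>t\<bar> + \<bar>t0\<bar>)"
          using good_dev[OF Ch_good[OF \<gamma>Ch] t0, of t] lt by (simp add: abs_le_iff)
      qed
    qed
    obtain \<eta> \<rho> where \<eta>: "\<eta> \<in> Ch" "\<And>\<gamma>. \<gamma> \<in> L \<Longrightarrow> \<gamma> \<le> \<eta>" "\<And>n. \<rho> n \<in> L"
      "\<And>t. (\<lambda>n. \<rho> n t) \<longlonglongrightarrow> \<eta> t"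
      using sup_chain[OF sub Lne c b] by metis
    have "\<eta> t0 \<le> x0"
      by (rule LIMSEQ_le_const2[OF \<eta>(4)]) (use \<eta>(3) in \<open>auto simp: L_def less_imp_le\<close>)
    then have "\<eta> \<in> L" using ne[OF \<eta>(1)] \<eta>(1) by (auto simp: L_def)
    then show ?thesis using \<eta>(2) by blast
  qed
  have exU: "\<exists>\<eta>. \<eta> \<in> U \<and> (\<forall>\<gamma>\<in>U. \<eta> \<le> \<gamma>)" if Une: "U \<noteq> {}"
  proof -
    have sub: "U \<subseteq> Ch" by (auto simp: U_def)
    have c: "continuous_on {0..T} (\<lambda>t. x0 - M * (\<bar>t\<bar> + \<bar>t0\<bar>))" by (intro continuous_intros)
    have b: "(\<lambda>t. x0 - M * (\<bar>t\<bar> + \<bar>t0\<bar>)) \<le> \<gamma>" if "\<gamma> \<in> U" for \<gamma>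
    proof -
      have \<gamma>Ch: "\<gamma> \<in> Ch" and lt: "\<gamma> t0 > x0" using that by (auto simp: U_def)
      show ?thesis unfolding le_fun_def
      proof
        fix t show "x0 - M * (\<bar>t\<bar> + \<bar>t0\<bar>) \<le> \<gamma> t"
          using good_dev[OF Ch_good[OF \<gamma>Ch] t0, of t] lt by (simp add: abs_le_iff)
      qed
    qed
    obtain \<eta> \<rho> where \<eta>: "\<eta> \<in> Ch" "\<And>\<gamma>. \<gamma> \<in> U \<Longrightarrow> \<eta> \<le> \<gamma>" "\<And>n. \<rho> n \<in> U"
      "\<And>t. (\<lambda>n. \<rho> n t) \<longlonglongrightarrow> \<eta> t"
      using inf_chain[OF sub Une c b] by metis
    have "x0 \<le> \<eta> t0"
      by (rule LIMSEQ_le_const[OF \<eta>(4)]) (use \<eta>(3) in \<open>auto simp: U_def less_imp_le\<close>)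
    then have "\<eta> \<in> U" using ne[OF \<eta>(1)] \<eta>(1) by (auto simp: U_def)
    then show ?thesis using \<eta>(2) by blast
  qed
  define \<eta>L where "\<eta>L = (SOME \<eta>. \<eta> \<in> L \<and> (\<forall>\<gamma>\<in>L. \<gamma> \<le> \<eta>))"
  define \<eta>U where "\<eta>U = (SOME \<eta>. \<eta> \<in> U \<and> (\<forall>\<gamma>\<in>U. \<eta> \<le> \<gamma>))"
  have \<eta>L: "\<eta>L \<in> L" "\<And>\<gamma>. \<gamma> \<in> L \<Longrightarrow> \<gamma> \<le> \<eta>L" if "L \<noteq> {}"
    using someI_ex[OF exL[OF that]] by (auto simp: \<eta>L_def)
  have \<eta>U: "\<eta>U \<in> U" "\<And>\<gamma>. \<gamma> \<in> U \<Longrightarrow> \<eta>U \<le> \<gamma>" if "U \<noteq> {}"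
    using someI_ex[OF exU[OF that]] by (auto simp: \<eta>U_def)
  define a where "a = (if L = {} then 1 else x0 - \<eta>L t0)"
  define b where "b = (if U = {} then 1 else \<eta>U t0 - x0)"
  have apos: "a > 0" using \<eta>L by (auto simp: a_def L_def)
  have bpos: "b > 0" using \<eta>U by (auto simp: b_def U_def)
  define r where "r = min a b / (2 * (M + 1))"
  have M1: "M + 1 > 0" using Mnn by simp
  have rpos: "r > 0" using apos bpos M1 by (simp add: r_def)
  have ra: "(M + 1) * r \<le> a / 2" and rb: "(M + 1) * r \<le> b / 2"
  proof -
    have "(M + 1) * r = min a b / 2" using M1 by (simp add: r_def field_simps)
    then show "(M + 1) * r \<le> a / 2" "(M + 1) * r \<le> b / 2" by auto
  qed
  obtain t1 x1 \<zeta> where t1: "t1 \<ge> 0" "\<bar>t1 - t0\<bar> < r" and x1: "\<bar>x1 - x0\<bar> < r" and \<zeta>: "good \<zeta>" "\<zeta> t1 = x1"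
    using dense[OF t0 rpos] by blast
  have Mr: "M * \<bar>t1 - t0\<bar> \<le> M * r" using t1 Mnn by (intro mult_left_mono) auto
  have lo1: "\<eta>L t1 < x1" if Lne: "L \<noteq> {}"
  proof -
    have g: "good \<eta>L" using \<eta>L(1)[OF Lne] by (auto simp: L_def intro: Ch_good)
    have "\<bar>\<eta>L t1 - \<eta>L t0\<bar> \<le> M * \<bar>t1 - t0\<bar>" by (rule good_lipD[OF g t0 t1(1)])
    moreover have "a = x0 - \<eta>L t0" using Lne by (simp add: a_def)
    ultimately show ?thesis using Mr ra x1 apos by (simp add: algebra_simps abs_le_iff abs_less_iff)
  qed
  have up1: "x1 < \<eta>U t1" if Une: "U \<noteq> {}"
  proof -
    have g: "good \<eta>U" using \<eta>U(1)[OF Une] by (auto simp: U_def intro: Ch_good)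
    have "\<bar>\<eta>U t1 - \<eta>U t0\<bar> \<le> M * \<bar>t1 - t0\<bar>" by (rule good_lipD[OF g t0 t1(1)])
    moreover have "b = \<eta>U t0 - x0" using Une by (simp add: b_def)
    ultimately show ?thesis using Mr rb x1 bpos by (simp add: algebra_simps abs_le_iff abs_less_iff)
  qed
  define \<zeta>1 where "\<zeta>1 = (if L = {} then \<zeta> else (\<lambda>t. max (\<zeta> t) (\<eta>L t)))"
  define \<zeta>2 where "\<zeta>2 = (if U = {} then \<zeta>1 else (\<lambda>t. min (\<zeta>1 t) (\<eta>U t)))"
  have g1: "good \<zeta>1"
  proof (cases "L = {}")
    case True then show ?thesis using \<zeta>(1) by (simp add: \<zeta>1_def)
  next
    case False
    then have "good \<eta>L" using \<eta>L(1)[OF False] by (auto simp: L_def intro: Ch_good)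
    then show ?thesis using False \<zeta>(1) by (simp add: \<zeta>1_def good_max)
  qed
  have g2: "good \<zeta>2"
  proof (cases "U = {}")
    case True then show ?thesis using g1 by (simp add: \<zeta>2_def)
  next
    case False
    then have "good \<eta>U" using \<eta>U(1)[OF False] by (auto simp: U_def intro: Ch_good)
    then show ?thesis using False g1 by (simp add: \<zeta>2_def good_min)
  qed
  have v1: "\<zeta>1 t1 = x1" using \<zeta>(2) lo1 by (auto simp: \<zeta>1_def)
  have v2: "\<zeta>2 t1 = x1" using v1 up1 by (auto simp: \<zeta>2_def)
  have cmp: "\<forall>\<gamma>\<in>Ch. \<gamma> \<le> \<zeta>2 \<or> \<zeta>2 \<le> \<gamma>"
  proof
    fix \<gamma> assume \<gamma>: "\<gamma> \<in> Ch"
    show "\<gamma> \<le> \<zeta>2 \<or> \<zeta>2 \<le> \<gamma>"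
    proof (cases "\<gamma> \<in> L")
      case True
      then have Lne: "L \<noteq> {}" by auto
      have a1: "\<gamma> \<le> \<zeta>1" using \<eta>L(2)[OF Lne True] Lne by (auto simp: \<zeta>1_def le_fun_def intro: le_max_iff_disj[THEN iffD2])
      have "\<gamma> \<le> \<eta>U" if Une: "U \<noteq> {}"
      proof -
        have "\<gamma> \<le> \<eta>U \<or> \<eta>U \<le> \<gamma>" using Ch_cmp[OF \<gamma>, of \<eta>U] \<eta>U(1)[OF Une] by (auto simp: U_def)
        moreover have "\<not> \<eta>U \<le> \<gamma>"
        proof
          assume "\<eta>U \<le> \<gamma>"
          then have "\<eta>U t0 \<le> \<gamma> t0" by (simp add: le_fun_def)
          then show False using True \<eta>U(1)[OF Une] by (auto simp: L_def U_def)
        qed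
        ultimately show ?thesis by blast
      qed
      then have "\<gamma> \<le> \<zeta>2" using a1 by (auto simp: \<zeta>2_def le_fun_def)
      then show ?thesis by blast
    next
      case False
      then have U: "\<gamma> \<in> U" using LU[OF \<gamma>] by blast
      then have Une: "U \<noteq> {}" by auto
      have "\<zeta>2 \<le> \<eta>U" using Une by (auto simp: \<zeta>2_def le_fun_def)
      then have "\<zeta>2 \<le> \<gamma>" using \<eta>U(2)[OF Une U] by (rule order_trans)
      then show ?thesis by blast
    qed
  qed
  have inCh: "\<zeta>2 \<in> Ch" by (rule Ch_max[OF g2 cmp])
  show False
  proof (cases "\<zeta>2 \<in> L")
    case True
    then have Lne: "L \<noteq> {}" by auto
    have "\<zeta>2 t1 \<le> \<eta>L t1" using \<eta>L(2)[OF Lne True] by (simp add: le_fun_def)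
    then show False using v2 lo1[OF Lne] by simp
  next
    case False
    then have U: "\<zeta>2 \<in> U" using LU[OF inCh] by blast
    then have Une: "U \<noteq> {}" by auto
    have "\<eta>U t1 \<le> \<zeta>2 t1" using \<eta>U(2)[OF Une U] by (simp add: le_fun_def)
    then show False using v2 up1[OF Une] by simp
  qed
qed

end

context chain_setting begin

lemma psi_unique: "\<gamma> \<in> Ch \<Longrightarrow> \<eta> \<in> Ch \<Longrightarrow> psi \<gamma> = psi \<eta> \<Longrightarrow> \<gamma> = \<eta>"
  using Ch_cmp[of \<gamma> \<eta>] psi_strict[of \<gamma> \<eta>] psi_strict[of \<eta> \<gamma>] Ch_good by metis

lemma norm_shift: "good \<gamma> \<Longrightarrow> \<gamma> t = \<gamma> (max 0 t)"
  by (auto simp: good_def NRM_def max_def)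

lemma psi_surj: "\<exists>\<gamma>\<in>Ch. psi \<gamma> = s"
proof (rule ccontr)
  assume "\<not> (\<exists>\<gamma>\<in>Ch. psi \<gamma> = s)"
  then have ne: "\<And>\<gamma>. \<gamma> \<in> Ch \<Longrightarrow> psi \<gamma> \<noteq> s" by blast
  define L where "L = {\<gamma>\<in>Ch. psi \<gamma> < s}"
  define U where "U = {\<gamma>\<in>Ch. psi \<gamma> > s}"
  have LU: "\<gamma> \<in> L \<or> \<gamma> \<in> U" if "\<gamma> \<in> Ch" for \<gamma>
    using ne[OF that] that by (auto simp: L_def U_def)
  obtain \<xi>U where \<xi>U: "\<xi>U \<in> U"
  proof -
    obtain \<gamma> where \<gamma>: "\<gamma> \<in> Ch" "\<gamma> 0 = s / T + M * T + 1" using coverage[of 0] by auto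
    have "T * (\<gamma> 0 - M * T) \<le> psi \<gamma>" using psi_bounds(1)[OF Ch_good[OF \<gamma>(1)]] .
    moreover have "T * (\<gamma> 0 - M * T) = s + T" using Tpos \<gamma>(2) by (simp add: field_simps)
    ultimately have "psi \<gamma> > s" using Tpos by simp
    then show ?thesis using that \<gamma>(1) by (auto simp: U_def)
  qed
  obtain \<xi>L where \<xi>L: "\<xi>L \<in> L"
  proof -
    obtain \<gamma> where \<gamma>: "\<gamma> \<in> Ch" "\<gamma> 0 = s / T - M * T - 1" using coverage[of 0] by auto
    have "psi \<gamma> \<le> T * (\<gamma> 0 + M * T)" using psi_bounds(2)[OF Ch_good[OF \<gamma>(1)]] .
    moreover have "T * (\<gamma> 0 + M * T) = s - T" using Tpos \<gamma>(2) by (simp add: field_simps)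
    ultimately have "psi \<gamma> < s" using Tpos by simp
    then show ?thesis using that \<gamma>(1) by (auto simp: L_def)
  qed
  have LleU: "\<gamma> \<le> \<eta>" if "\<gamma> \<in> L" "\<eta> \<in> U" for \<gamma> \<eta>
  proof -
    have "\<gamma> \<le> \<eta> \<or> \<eta> \<le> \<gamma>" using Ch_cmp that by (auto simp: L_def U_def)
    moreover have "\<not> \<eta> \<le> \<gamma>"
    proof
      assume "\<eta> \<le> \<gamma>"
      then have "psi \<eta> \<le> psi \<gamma>" using psi_mono Ch_good that by (auto simp: L_def U_def)
      then show False using that by (auto simp: L_def U_def)
    qed
    ultimately show ?thesis by blast
  qed
  have cU: "continuous_on {0..T} \<xi>U"
    by (rule continuous_on_subset[OF good_cont[OF Ch_good]]) (use \<xi>U in \<open>auto simp: U_def\<close>)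
  have cL: "continuous_on {0..T} \<xi>L"
    by (rule continuous_on_subset[OF good_cont[OF Ch_good]]) (use \<xi>L in \<open>auto simp: L_def\<close>)
  have Lsub: "L \<subseteq> Ch" "L \<noteq> {}" using \<xi>L by (auto simp: L_def)
  have Usub: "U \<subseteq> Ch" "U \<noteq> {}" using \<xi>U by (auto simp: U_def)
  obtain \<eta>L \<rho>L where \<eta>L: "\<eta>L \<in> Ch" "\<And>\<gamma>. \<gamma> \<in> L \<Longrightarrow> \<gamma> \<le> \<eta>L" "psi \<eta>L = Sup (psi ` L)"
    using sup_chain[OF Lsub cU LleU[OF _ \<xi>U]] by metis
  obtain \<eta>U \<rho>U where \<eta>U: "\<eta>U \<in> Ch" "\<And>\<gamma>. \<gamma> \<in> U \<Longrightarrow> \<eta>U \<le> \<gamma>" "psi \<eta>U = Inf (psi ` U)"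
    using inf_chain[OF Usub cL LleU[OF \<xi>L]] by metis
  have "psi \<eta>L \<le> s" unfolding \<eta>L(3) by (rule cSup_least) (use Lsub in \<open>auto simp: L_def\<close>)
  then have \<eta>LL: "\<eta>L \<in> L" using ne[OF \<eta>L(1)] \<eta>L(1) by (auto simp: L_def)
  have "s \<le> psi \<eta>U" unfolding \<eta>U(3) by (rule cInf_greatest) (use Usub in \<open>auto simp: U_def\<close>)
  then have \<eta>UU: "\<eta>U \<in> U" using ne[OF \<eta>U(1)] \<eta>U(1) by (auto simp: U_def)
  have le: "\<eta>L \<le> \<eta>U" by (rule LleU[OF \<eta>LL \<eta>UU])
  have "\<eta>L \<noteq> \<eta>U" using \<eta>LL \<eta>UU by (auto simp: L_def U_def)
  then obtain t where "\<eta>L t \<noteq> \<eta>U t" by (auto simp: fun_eq_iff)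
  then have "\<eta>L t < \<eta>U t" using le by (auto simp: le_fun_def order_le_less)
  then have lt: "\<eta>L (max 0 t) < \<eta>U (max 0 t)"
    using norm_shift[OF Ch_good[OF \<eta>L(1)], of t] norm_shift[OF Ch_good[OF \<eta>U(1)], of t] by simp
  define t0 where "t0 = max 0 t"
  define x0 where "x0 = (\<eta>L t0 + \<eta>U t0) / 2"
  obtain \<gamma> where \<gamma>: "\<gamma> \<in> Ch" "\<gamma> t0 = x0" using coverage[of t0] by (auto simp: t0_def)
  show False
  proof (cases "\<gamma> \<in> L")
    case True
    then have "\<gamma> t0 \<le> \<eta>L t0" using \<eta>L(2) by (auto simp: le_fun_def)
    then show False using \<gamma>(2) lt by (simp add: x0_def t0_def)
  next
    case False
    then have "\<gamma> \<in> U" using LU[OF \<gamma>(1)] by blast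
    then have "\<eta>U t0 \<le> \<gamma> t0" using \<eta>U(2) by (auto simp: le_fun_def)
    then show False using \<gamma>(2) lt by (simp add: x0_def t0_def)
  qed
qed

definition "par s = (THE \<gamma>. \<gamma> \<in> Ch \<and> psi \<gamma> = s)"

lemma par: "par s \<in> Ch" "psi (par s) = s"
proof -
  have "\<exists>!\<gamma>. \<gamma> \<in> Ch \<and> psi \<gamma> = s" using psi_surj[of s] psi_unique by blast
  from theI'[OF this] show "par s \<in> Ch" "psi (par s) = s" by (auto simp: par_def)
qed

lemma par_eq: "\<gamma> \<in> Ch \<Longrightarrow> par (psi \<gamma>) = \<gamma>"
  using psi_unique[OF par(1)] par(2) by blast

lemma par_mono: assumes "s1 \<le> s2" shows "par s1 \<le> par s2"
proof -
  have "par s1 \<le> par s2 \<or> par s2 \<le> par s1" using Ch_cmp par(1) by blast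
  moreover have "par s1 = par s2" if le: "par s2 \<le> par s1"
  proof -
    have "psi (par s2) \<le> psi (par s1)" using psi_mono[OF _ _ le] Ch_good par(1) by blast
    then have "s1 = s2" using assms par(2) by simp
    then show ?thesis by simp
  qed
  ultimately show ?thesis by auto
qed

lemma par_lim_right: "(\<lambda>n. par (s + 1 / Suc n) t) \<longlonglongrightarrow> par s t"
proof -
  let ?\<rho> = "\<lambda>n. par (s + 1 / Suc n)"
  have dec: "?\<rho> (Suc n) \<le> ?\<rho> n" for n by (rule par_mono) (simp add: frac_le)
  have lb: "par s \<le> ?\<rho> n" for n by (rule par_mono) simp
  have conv: "\<exists>l. (\<lambda>n. ?\<rho> n t) \<longlonglongrightarrow> l" for t
  proof -
    have "decseq (\<lambda>n. ?\<rho> n t)" using dec by (intro decseq_SucI) (simp add: le_fun_def)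
    moreover have "\<forall>i. par s t \<le> ?\<rho> i t" using lb by (simp add: le_fun_def)
    ultimately show ?thesis by (rule decseq_convergent) blast
  qed
  define \<eta> where "\<eta> t = lim (\<lambda>n. ?\<rho> n t)" for t
  have lim: "(\<lambda>n. ?\<rho> n t) \<longlonglongrightarrow> \<eta> t" for t
    using conv[of t] unfolding \<eta>_def by (metis limI)
  have \<eta>: "\<eta> \<in> Ch" "(\<lambda>n. psi (?\<rho> n)) \<longlonglongrightarrow> psi \<eta>"
    using chain_lim_dec[OF par(1) dec lim] by auto
  have "(\<lambda>n. s + inverse (real (Suc n))) \<longlonglongrightarrow> s + 0"
    by (intro tendsto_add tendsto_const LIMSEQ_inverse_real_of_nat)
  then have "(\<lambda>n. psi (?\<rho> n)) \<longlonglongrightarrow> s" by (simp add: par(2) inverse_eq_divide)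
  then have "psi \<eta> = s" using \<eta>(2) LIMSEQ_unique by blast
  then have "\<eta> = par s" using par_eq[OF \<eta>(1)] by simp
  then show ?thesis using lim by simp
qed

lemma par_lim_left: "(\<lambda>n. par (s - 1 / Suc n) t) \<longlonglongrightarrow> par s t"
proof -
  let ?\<rho> = "\<lambda>n. par (s - 1 / Suc n)"
  have inc: "?\<rho> n \<le> ?\<rho> (Suc n)" for n by (rule par_mono) (simp add: frac_le)
  have ub: "?\<rho> n \<le> par s" for n by (rule par_mono) simp
  have conv: "\<exists>l. (\<lambda>n. ?\<rho> n t) \<longlonglongrightarrow> l" for t
  proof -
    have "incseq (\<lambda>n. ?\<rho> n t)" using inc by (intro incseq_SucI) (simp add: le_fun_def)
    moreover have "\<forall>i. ?\<rho> i t \<le> par s t" using ub by (simp add: le_fun_def)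
    ultimately show ?thesis by (rule incseq_convergent) blast
  qed
  define \<eta> where "\<eta> t = lim (\<lambda>n. ?\<rho> n t)" for t
  have lim: "(\<lambda>n. ?\<rho> n t) \<longlonglongrightarrow> \<eta> t" for t
    using conv[of t] unfolding \<eta>_def by (metis limI)
  have \<eta>: "\<eta> \<in> Ch" "(\<lambda>n. psi (?\<rho> n)) \<longlonglongrightarrow> psi \<eta>"
    using chain_lim_inc[OF par(1) inc lim] by auto
  have "(\<lambda>n. s - inverse (real (Suc n))) \<longlonglongrightarrow> s - 0"
    by (intro tendsto_diff tendsto_const LIMSEQ_inverse_real_of_nat)
  then have "(\<lambda>n. psi (?\<rho> n)) \<longlonglongrightarrow> s" by (simp add: par(2) inverse_eq_divide)
  then have "psi \<eta> = s" using \<eta>(2) LIMSEQ_unique by blast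
  then have "\<eta> = par s" using par_eq[OF \<eta>(1)] by simp
  then show ?thesis using lim by simp
qed

end

context chain_setting begin

lemma par_cont: "continuous_on ({0..} \<times> UNIV) (\<lambda>(t,y). par y t)"
  unfolding continuous_on_iff
proof (intro ballI allI impI)
  fix p :: "real \<times> real" and e :: real
  assume p: "p \<in> {0..} \<times> UNIV" and e: "e > 0"
  obtain t y where ty: "p = (t, y)" by (cases p)
  have t: "t \<ge> 0" using p ty by auto
  obtain n1 where n1: "\<And>n. n \<ge> n1 \<Longrightarrow> norm (par (y + 1 / Suc n) t - par y t) < e / 2"
    using LIMSEQ_D[OF par_lim_right[of y t], of "e/2"] e by auto
  obtain n2 where n2: "\<And>n. n \<ge> n2 \<Longrightarrow> norm (par (y - 1 / Suc n) t - par y t) < e / 2"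
    using LIMSEQ_D[OF par_lim_left[of y t], of "e/2"] e by auto
  define N where "N = max n1 n2"
  have r0: "norm (par (y + 1 / Suc N) t - par y t) < e / 2" using n1[of N] by (simp add: N_def)
  have l0: "norm (par (y - 1 / Suc N) t - par y t) < e / 2" using n2[of N] by (simp add: N_def)
  have r: "par (y + 1 / Suc N) t - par y t < e / 2" using r0 unfolding real_norm_def by arith
  have l: "par y t - par (y - 1 / Suc N) t < e / 2" using l0 unfolding real_norm_def by arith
  have M1: "M + 1 > 0" using Mnn by simp
  define d where "d = min (1 / Suc N) (e / (2 * (M + 1)))"
  have dpos: "d > 0" using e M1 by (simp add: d_def)
  show "\<exists>d>0. \<forall>p'\<in>{0..} \<times> UNIV. dist p' p < d \<longrightarrow> dist ((\<lambda>(t,y). par y t) p') ((\<lambda>(t,y). par y t) p) < e"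
  proof (intro exI[of _ d] conjI dpos ballI impI)
    fix p' :: "real \<times> real" assume p': "p' \<in> {0..} \<times> UNIV" and dp: "dist p' p < d"
    obtain t' y' where ty': "p' = (t', y')" by (cases p')
    have t': "t' \<ge> 0" using p' ty' by auto
    have dt: "\<bar>t' - t\<bar> < d" using dist_fst_le[of p' p] dp ty ty' by (simp add: dist_real_def)
    have dy: "\<bar>y' - y\<bar> < d" using dist_snd_le[of p' p] dp ty ty' by (simp add: dist_real_def)
    have a: "\<bar>par y' t' - par y' t\<bar> < e / 2"
    proof -
      have "\<bar>par y' t' - par y' t\<bar> \<le> M * \<bar>t' - t\<bar>" using good_lipD[OF Ch_good[OF par(1)] t t'] .
      also have "\<dots> \<le> M * (e / (2 * (M + 1)))"
        using dt Mnn by (intro mult_left_mono) (auto simp: d_def)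
      also have "\<dots> < e / 2" using e M1 by (simp add: field_simps)
      finally show ?thesis .
    qed
    have y1: "y' \<le> y + 1 / Suc N" and y2: "y - 1 / Suc N \<le> y'" using dy by (auto simp: d_def)
    have "par y' t \<le> par (y + 1 / Suc N) t" using par_mono[OF y1] by (simp add: le_fun_def)
    moreover have "par (y - 1 / Suc N) t \<le> par y' t" using par_mono[OF y2] by (simp add: le_fun_def)
    moreover have "par y t \<le> par (y + 1 / Suc N) t" "par (y - 1 / Suc N) t \<le> par y t"
      using par_mono[of y "y + 1 / Suc N"] par_mono[of "y - 1 / Suc N" y] by (auto simp: le_fun_def)
    ultimately have b: "\<bar>par y' t - par y t\<bar> < e / 2" using r l by arith
    have "\<bar>par y' t' - par y t\<bar> < e" using a b by linarith
    then show "dist ((\<lambda>(t,y). par y t) p') ((\<lambda>(t,y). par y t) p) < e"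
      by (simp add: ty ty' dist_real_def)
  qed
qed

lemma final: "\<exists>X. lagrangian_param f u X \<and> (\<forall>y. lipschitz_on G {0..} (\<lambda>t. u t (X t y)))"
proof (intro exI conjI allI)
  let ?X = "\<lambda>t y. par y t"
  show "lagrangian_param f u ?X" unfolding lagrangian_param_def
  proof (intro conjI allI impI)
    show "continuous_on ({0..} \<times> UNIV) (\<lambda>(t, y). ?X t y)" by (rule par_cont)
    show "(\<lambda>(t, y). ?X t y) ` ({0..} \<times> UNIV) = UNIV"
    proof (rule set_eqI, rule iffI)
      fix x :: real assume "x \<in> UNIV"
      obtain \<gamma> where \<gamma>: "\<gamma> \<in> Ch" "\<gamma> 0 = x" using coverage[of 0] by auto
      have "x = (\<lambda>(t, y). ?X t y) (0, psi \<gamma>)" using par_eq[OF \<gamma>(1)] \<gamma>(2) by simp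
      then show "x \<in> (\<lambda>(t, y). ?X t y) ` ({0..} \<times> UNIV)" by force
    qed simp
    fix y
    show "char_curve f u (\<lambda>t. ?X t y)"
      using DG_imp_char[of "par y"] Ch_good[OF par(1)] by (simp add: good_def)
  next
    fix t :: real assume "t \<ge> 0"
    show "mono (?X t)" by (rule monoI) (use par_mono in \<open>auto simp: le_fun_def\<close>)
  qed
  fix y
  show "lipschitz_on G {0..} (\<lambda>t. u t (?X t y))"
    using Ch_good[OF par(1)] by (simp add: good_def LU_def)
qed

end

context setting begin

lemma char_normalize:
  assumes ch: "char_curve f u \<gamma>" and lu: "LU \<gamma>"
  shows "good (\<lambda>s. \<gamma> (max 0 s))"
proof -
  let ?\<nu> = "\<lambda>s. \<gamma> (max 0 s)"
  have DG: "DG \<gamma>" by (rule IG_imp_DG[OF char_imp_IG[OF ch]])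
  have eq0: "?\<nu> s = \<gamma> s" if "s \<ge> 0" for s using that by simp
  have c: "continuous_on {0..} ?\<nu>"
    using DG unfolding DG_def by (subst continuous_on_cong[OF refl eq0]) auto
  have d: "(?\<nu> has_real_derivative hh s (?\<nu> s)) (at s)" if s: "s > 0" for s
  proof -
    have ev: "\<forall>\<^sub>F r in nhds s. ?\<nu> r = \<gamma> r"
    proof -
      have "\<forall>\<^sub>F r in nhds s. r \<in> {0<..}" using s by (intro eventually_nhds_in_open) auto
      then show ?thesis by eventually_elim simp
    qed
    have "(\<gamma> has_real_derivative hh s (\<gamma> s)) (at s)" using DG s by (simp add: DG_def)
    then show ?thesis using DERIV_cong_ev[OF refl ev refl] s by simp
  qed
  have "DG ?\<nu>" unfolding DG_def using c d by blast
  moreover have "LU ?\<nu>" using lu unfolding LU_def lipschitz_on_def by simp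
  moreover have "NRM ?\<nu>" unfolding NRM_def by simp
  ultimately show ?thesis by (simp add: good_def)
qed

end

theorem lemma1p4:
  fixes f :: "real \<Rightarrow> real" and u :: "real \<Rightarrow> real \<Rightarrow> real" and G :: real
    and D :: "(real \<times> real) set"
  assumes "C2 f"
    and "G > 0"
    and "continuous_on ({0..} \<times> UNIV) (\<lambda>(t,x). u t x)"
    and "compact (closure {(t,x) \<in> {0..} \<times> UNIV. u t x \<noteq> 0})"
    and "D \<subseteq> {0..} \<times> UNIV"
    and "{0..} \<times> UNIV \<subseteq> closure D"
    and "\<forall>(t,x) \<in> D. \<exists>\<gamma>. char_curve f u \<gamma> \<and> \<gamma> t = x \<and>
                        lipschitz_on G {0..} (\<lambda>s. u s (\<gamma> s))"
  shows "\<exists>X. lagrangian_param f u X \<and> (\<forall>y. lipschitz_on G {0..} (\<lambda>t. u t (X t y)))"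
proof -
  note C2 = assms(1) and Gpos = assms(2) and ucont = assms(3) and cpt = assms(4)
    and Dsub = assms(5) and Ddense = assms(6) and Dcurves = assms(7)
  obtain f' where f': "\<And>x. (f has_real_derivative f' x) (at x)"
    and f'd: "\<And>x. (f' has_real_derivative (SOME d. (f' has_real_derivative d) (at x))) (at x)"
    using C2 unfolding C2_def by (metis someI)
  have df: "deriv f x = f' x" for x using f' by (rule DERIV_imp_deriv)
  have f'c: "continuous_on UNIV f'"
    by (rule continuous_at_imp_continuous_on) (use f'd DERIV_isCont in blast)
  have hcont: "continuous_on ({0..} \<times> UNIV) (\<lambda>(t,x). deriv f (u t x))"
  proof -
    have "continuous_on ({0..} \<times> UNIV) (\<lambda>p. f' ((\<lambda>(t,x). u t x) p))"
      by (rule continuous_on_compose2[OF f'c ucont]) auto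
    then show ?thesis by (simp add: df case_prod_beta)
  qed
  define K where "K = closure {(t,x) \<in> {0..} \<times> UNIV. u t x \<noteq> (0::real)}"
  have Ksub: "K \<subseteq> {0..} \<times> UNIV"
    unfolding K_def by (rule closure_minimal) (auto intro: closed_Times)
  have Kc: "compact K" using cpt by (simp add: K_def)
  have supp: "(t,x) \<in> K" if "t \<ge> 0" "u t x \<noteq> 0" for t x
    using that closure_subset unfolding K_def by fastforce
  have "compact ((\<lambda>(t,x). u t x) ` K)"
    by (rule compact_continuous_image[OF continuous_on_subset[OF ucont Ksub] Kc])
  then obtain U where U: "\<And>p. p \<in> K \<Longrightarrow> \<bar>(\<lambda>(t,x). u t x) p\<bar> \<le> U"
    using compact_imp_bounded[THEN bounded_iff[THEN iffD1]] by force
  have ub: "\<bar>u t x\<bar> \<le> \<bar>U\<bar>" if "t \<ge> 0" for t x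
  proof (cases "u t x = 0")
    case True then show ?thesis by simp
  next
    case False then show ?thesis using U[OF supp[OF that False]] by simp
  qed
  have "compact (f' ` {-\<bar>U\<bar>..\<bar>U\<bar>})"
    by (rule compact_continuous_image[OF continuous_on_subset[OF f'c]]) auto
  then obtain M where M: "\<And>v. v \<in> {-\<bar>U\<bar>..\<bar>U\<bar>} \<Longrightarrow> \<bar>f' v\<bar> \<le> M"
    using compact_imp_bounded[THEN bounded_iff[THEN iffD1]] by force
  have hbound: "\<bar>deriv f (u t x)\<bar> \<le> M" if "t \<ge> 0" for t x
    using M[of "u t x"] ub[OF that, of x] by (simp add: df abs_le_iff)
  obtain B where B: "\<And>p. p \<in> K \<Longrightarrow> norm p \<le> B"
    using compact_imp_bounded[OF Kc] bounded_iff by metis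
  define T where "T = \<bar>B\<bar> + 1"
  have Tpos: "T > 0" by (simp add: T_def)
  have usupp: "u t x = 0" if "t \<ge> T" for t x
  proof (rule ccontr)
    assume "u t x \<noteq> 0"
    moreover have "t \<ge> 0" using that Tpos by simp
    ultimately have "(t,x) \<in> K" using supp by blast
    then have "norm (t,x) \<le> B" by (rule B)
    moreover have "\<bar>t\<bar> \<le> norm (t,x)" using norm_fst_le[of t x] by simp
    ultimately show False using that by (simp add: T_def)
  qed
  interpret S: setting f u G M T
    by unfold_locales (use hcont ucont hbound Tpos usupp Gpos in auto)
  obtain Ch where Ch: "\<forall>\<gamma>\<in>Ch. S.good \<gamma>" "\<forall>\<gamma>\<in>Ch. \<forall>\<eta>\<in>Ch. \<gamma> \<le> \<eta> \<or> \<eta> \<le> \<gamma>"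
    "\<And>\<xi>. S.good \<xi> \<Longrightarrow> (\<forall>\<gamma>\<in>Ch. \<gamma> \<le> \<xi> \<or> \<xi> \<le> \<gamma>) \<Longrightarrow> \<xi> \<in> Ch"
    by (rule S.max_chain_exists) blast
  have dense: "\<exists>t1 x1 \<zeta>. t1 \<ge> 0 \<and> \<bar>t1 - t\<bar> < e \<and> \<bar>x1 - x\<bar> < e \<and> S.good \<zeta> \<and> \<zeta> t1 = x1"
    if t: "t \<ge> 0" and e: "e > 0" for t x e
  proof -
    have "(t,x) \<in> closure D" using Ddense t by auto
    then obtain q where q: "q \<in> D" "dist q (t,x) < e" using e closure_approachable by blast
    obtain t1 x1 where q1: "q = (t1, x1)" by (cases q)
    have t1: "t1 \<ge> 0" using Dsub q q1 by auto
    have "\<bar>t1 - t\<bar> < e" using dist_fst_le[of q "(t,x)"] q q1 by (simp add: dist_real_def)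
    moreover have "\<bar>x1 - x\<bar> < e" using dist_snd_le[of q "(t,x)"] q q1 by (simp add: dist_real_def)
    moreover obtain \<gamma> where \<gamma>: "char_curve f u \<gamma>" "\<gamma> t1 = x1" "lipschitz_on G {0..} (\<lambda>s. u s (\<gamma> s))"
      using Dcurves q q1 by fastforce
    moreover have "S.good (\<lambda>s. \<gamma> (max 0 s))"
      using S.char_normalize[OF \<gamma>(1)] \<gamma>(3) by (simp add: S.LU_def)
    ultimately show ?thesis using t1 by (intro exI[of _ t1] exI[of _ x1] exI[of _ "\<lambda>s. \<gamma> (max 0 s)"]) auto
  qed
  interpret CS: chain_setting f u G M T Ch
    by unfold_locales (use Ch dense in auto)
  show ?thesis by (rule CS.final)
qed

end
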